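(* Let $c\in(0,1)$. If $Y:\mathbb{R}\to\mathbb{R}$ is a function such that $|Y(x)|\le e^{-|x|}$ on $\mathbb{R}$ and $\int Y>0$, then for any $h\in H^1(\mathbb{R})$, \[ \int e^{-c|x|}h^2\le \frac{4}{c\int Y}\int Yh^2+\frac{64}{c^2\left(\int Y\right)^2}\int (h')^2. \] *)

theory Defs
  imports "HOL-Analysis.Analysis"
begin

definition test_function :: "(real \<Rightarrow> real) \<Rightarrow> bool" where
  "test_function \<phi> \<longleftrightarrow>
     (\<forall>n x. ((deriv ^^ n) \<phi>) differentiable (at x)) \<and>
     (\<exists>R. \<forall>x. \<bar>x\<bar> > R \<longrightarrow> \<phi> x = 0)"

definition H1_weak_deriv :: "(real \<Rightarrow> real) \<Rightarrow> (real \<Rightarrow> real) \<Rightarrow> bool" where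
  "H1_weak_deriv h g \<longleftrightarrow>
     h \<in> borel_measurable lborel \<and> g \<in> borel_measurable lborel \<and>
     integrable lborel (\<lambda>x. (h x)\<^sup>2) \<and> integrable lborel (\<lambda>x. (g x)\<^sup>2) \<and>
     (\<forall>\<phi>. test_function \<phi> \<longrightarrow>
        (\<integral>x. h x * deriv \<phi> x \<partial>lborel) = - (\<integral>x. g x * \<phi> x \<partial>lborel))"

end

theory Submission
  imports Defs "HOL-Computational_Algebra.Polynomial"
begin

fun Ck :: "nat \<Rightarrow> (real \<Rightarrow> real) \<Rightarrow> bool" where
  "Ck 0 f = True"
| "Ck (Suc k) f = (\<exists>f'. (\<forall>x. (f has_real_derivative f' x) (at x)) \<and> Ck k f')"

lemma Ck_mono: "Ck (Suc k) f \<Longrightarrow> Ck k f"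
proof (induction k arbitrary: f)
  case 0 then show ?case by simp
next
  case (Suc k)
  then obtain f' where "\<forall>x. (f has_real_derivative f' x) (at x)" "Ck (Suc k) f'" by auto
  then show ?case using Suc.IH by auto
qed

lemma Ck_const: "Ck k (\<lambda>x. c)"
  by (induction k arbitrary: c) (auto intro!: exI[of _ "\<lambda>x. 0"] derivative_eq_intros)

lemma Ck_add: "Ck k f \<Longrightarrow> Ck k g \<Longrightarrow> Ck k (\<lambda>x. f x + g x)"
proof (induction k arbitrary: f g)
  case 0 then show ?case by simp
next
  case (Suc k)
  from Suc.prems obtain f' g' where f': "\<forall>x. (f has_real_derivative f' x) (at x)" "Ck k f'"
    and g': "\<forall>x. (g has_real_derivative g' x) (at x)" "Ck k g'" by auto
  show ?case unfolding Ck.simps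
    by (rule exI[of _ "\<lambda>x. f' x + g' x"]) (use f' g' Suc.IH in \<open>auto intro!: derivative_eq_intros\<close>)
qed

lemma Ck_mult: "Ck k f \<Longrightarrow> Ck k g \<Longrightarrow> Ck k (\<lambda>x. f x * g x)"
proof (induction k arbitrary: f g)
  case 0 then show ?case by simp
next
  case (Suc k)
  from Suc.prems obtain f' g' where f': "\<forall>x. (f has_real_derivative f' x) (at x)" "Ck k f'"
    and g': "\<forall>x. (g has_real_derivative g' x) (at x)" "Ck k g'" by auto
  have fk: "Ck k f" and gk: "Ck k g" using Suc.prems Ck_mono by auto
  show ?case unfolding Ck.simps
  proof (rule exI[of _ "\<lambda>x. f' x * g x + f x * g' x"], intro conjI allI)
    fix x show "((\<lambda>x. f x * g x) has_real_derivative f' x * g x + f x * g' x) (at x)"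
      using f'(1) g'(1) by (auto intro!: derivative_eq_intros)
  next
    show "Ck k (\<lambda>x. f' x * g x + f x * g' x)"
      using Suc.IH f' g' fk gk Ck_add by auto
  qed
qed

lemma Ck_inverse: "Ck k g \<Longrightarrow> (\<forall>x. g x \<noteq> 0) \<Longrightarrow> Ck k (\<lambda>x. inverse (g x))"
proof (induction k arbitrary: g)
  case 0 then show ?case by simp
next
  case (Suc k)
  from Suc.prems obtain g' where g': "\<forall>x. (g has_real_derivative g' x) (at x)" "Ck k g'" by auto
  have gk: "Ck k g" using Suc.prems Ck_mono by auto
  have ik: "Ck k (\<lambda>x. inverse (g x))" using Suc.IH gk Suc.prems by auto
  show ?case unfolding Ck.simps
  proof (rule exI[of _ "\<lambda>x. (-1) * g' x * (inverse (g x) * inverse (g x))"], intro conjI allI)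
    fix x show "((\<lambda>x. inverse (g x)) has_real_derivative (-1) * g' x * (inverse (g x) * inverse (g x))) (at x)"
      using g'(1) Suc.prems(2) by (auto intro!: derivative_eq_intros simp: power2_eq_square)
  next
    show "Ck k (\<lambda>x. (-1) * g' x * (inverse (g x) * inverse (g x)))"
      using Ck_mult[OF Ck_mult[OF Ck_const[of k "-1"] g'(2)] Ck_mult[OF ik ik]] by simp
  qed
qed

lemma Ck_affine: "Ck k f \<Longrightarrow> Ck k (\<lambda>x. f (a * x + b))"
proof (induction k arbitrary: f)
  case 0 then show ?case by simp
next
  case (Suc k)
  from Suc.prems obtain f' where f': "\<forall>x. (f has_real_derivative f' x) (at x)" "Ck k f'" by auto
  show ?case unfolding Ck.simps
  proof (rule exI[of _ "\<lambda>x. a * f' (a * x + b)"], intro conjI allI)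
    fix x show "((\<lambda>x. f (a * x + b)) has_real_derivative a * f' (a * x + b)) (at x)"
    proof -
      have "((\<lambda>x. a*x+b) has_real_derivative a) (at x)" by (auto intro!: derivative_eq_intros)
      from DERIV_chain2[OF f'(1)[rule_format] this] show ?thesis by (simp add: mult.commute)
    qed
  next
    show "Ck k (\<lambda>x. a * f' (a * x + b))" using Ck_mult[OF Ck_const Suc.IH[OF f'(2)]] by simp
  qed
qed

lemma Ck_Suc_deriv:
  assumes "Ck (Suc k) f"
  shows "Ck k (deriv f)" "\<And>x. (f has_real_derivative deriv f x) (at x)"
proof -
  from assms obtain f' where f': "\<forall>x. (f has_real_derivative f' x) (at x)" "Ck k f'" by auto
  have "deriv f = f'" using f'(1) DERIV_imp_deriv by blast
  then show "Ck k (deriv f)" "\<And>x. (f has_real_derivative deriv f x) (at x)" using f' by auto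
qed

definition smooth :: "(real \<Rightarrow> real) \<Rightarrow> bool" where
  "smooth f \<longleftrightarrow> (\<forall>k. Ck k f)"

lemma smooth_deriv: "smooth f \<Longrightarrow> smooth (deriv f)"
  unfolding smooth_def using Ck_Suc_deriv(1) by blast

lemma smooth_DERIV: "smooth f \<Longrightarrow> (f has_real_derivative deriv f x) (at x)"
  unfolding smooth_def using Ck_Suc_deriv(2)[of 0 f] by blast

lemma smooth_test:
  assumes "smooth f" "\<exists>R. \<forall>x. \<bar>x\<bar> > R \<longrightarrow> f x = 0"
  shows "test_function f"
proof -
  have "\<forall>f. smooth f \<longrightarrow> (\<forall>x. ((deriv ^^ n) f) differentiable (at x))" for n
  proof (induction n)
    case 0 then show ?case using smooth_DERIV real_differentiable_def by fastforce
  next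
    case (Suc n)
    show ?case
    proof (intro allI impI)
      fix f :: "real \<Rightarrow> real" and x assume "smooth f"
      then have "smooth (deriv f)" by (rule smooth_deriv)
      then show "((deriv ^^ Suc n) f) differentiable (at x)"
        using Suc by (simp add: funpow_Suc_right del: funpow.simps)
    qed
  qed
  then show ?thesis using assms unfolding test_function_def by blast
qed

definition gp :: "real poly \<Rightarrow> real \<Rightarrow> real" where
  "gp p x = (if x > 0 then poly p (inverse x) * exp (- inverse x) else 0)"

definition Qp :: "real poly \<Rightarrow> real poly" where
  "Qp p = [:0,0,1:] * (p - pderiv p)"

lemma poly_exp_lim: "((\<lambda>t::real. poly (r::real poly) t * exp (- t)) \<longlongrightarrow> 0) at_top"
proof -
  have eq: "poly r t * exp (- t) = (\<Sum>i\<le>degree r. coeff r i * (t ^ i / exp t))" for t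
    by (simp add: poly_altdef exp_minus divide_inverse sum_distrib_right mult.assoc)
  have "((\<lambda>t. \<Sum>i\<le>degree r. coeff r i * (t ^ i / exp t)) \<longlongrightarrow> (\<Sum>i\<le>degree r. coeff r i * 0)) at_top"
    by (intro tendsto_sum tendsto_mult tendsto_const tendsto_power_div_exp_0)
  then show ?thesis by (simp add: eq)
qed

lemma gp_deriv: "(gp p has_real_derivative gp (Qp p) x) (at x)"
proof (cases "x > 0")
  case True
  have "((\<lambda>x. poly p (inverse x) * exp (- inverse x)) has_real_derivative
          poly (Qp p) (inverse x) * exp (- inverse x)) (at x)"
    using True
    by (auto intro!: derivative_eq_intros simp: Qp_def power2_eq_square field_simps)
  then have "(gp p has_real_derivative poly (Qp p) (inverse x) * exp (- inverse x)) (at x)"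
    by (rule has_field_derivative_transform_within_open[where S="{0<..}"])
       (use True in \<open>auto simp: gp_def\<close>)
  then show ?thesis using True by (simp add: gp_def)
next
  case False
  show ?thesis
  proof (cases "x < 0")
    case True
    have "((\<lambda>x. 0) has_real_derivative 0) (at x)" by simp
    then have "(gp p has_real_derivative 0) (at x)"
      by (rule has_field_derivative_transform_within_open[where S="{..<0}"])
         (use True in \<open>auto simp: gp_def\<close>)
    then show ?thesis using True by (simp add: gp_def)
  next
    case False
    with \<open>\<not> x > 0\<close> have x0: "x = 0" by simp
    have "((\<lambda>y. (gp p y - gp p 0) / (y - 0)) \<longlongrightarrow> 0) (at 0)"
      unfolding filterlim_at_split
    proof
      show "((\<lambda>y. (gp p y - gp p 0) / (y - 0)) \<longlongrightarrow> 0) (at_left 0)"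
      proof (rule tendsto_eventually)
        show "\<forall>\<^sub>F y in at_left 0. (gp p y - gp p 0) / (y - 0) = (0::real)"
          by (auto simp: eventually_at_left_field gp_def intro!: exI[of _ "-1"])
      qed
    next
      have lim: "((\<lambda>t. poly (pCons 0 p) t * exp (- t)) \<longlongrightarrow> 0) at_top" by (rule poly_exp_lim)
      have "((\<lambda>y. poly (pCons 0 p) (inverse y) * exp (- inverse y)) \<longlongrightarrow> 0) (at_right 0)"
        using filterlim_compose[OF lim filterlim_inverse_at_top_right] by simp
      then show "((\<lambda>y. (gp p y - gp p 0) / (y - 0)) \<longlongrightarrow> 0) (at_right 0)"
      proof (rule Lim_transform_eventually)
        show "\<forall>\<^sub>F y in at_right 0. poly (pCons 0 p) (inverse y) * exp (- inverse y) = (gp p y - gp p 0) / (y - 0)"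
          by (auto simp: eventually_at_right_field gp_def field_simps intro!: exI[of _ "1"])
      qed
    qed
    then show ?thesis using x0 by (simp add: has_field_derivative_iff gp_def)
  qed
qed

lemma Ck_gp: "Ck k (gp p)"
proof (induction k arbitrary: p)
  case 0 then show ?case by simp
next
  case (Suc k)
  show ?case unfolding Ck.simps using gp_deriv Suc.IH by blast
qed

definition psi :: "real \<Rightarrow> real" where "psi x = (if x > 0 then exp (- inverse x) else 0)"

lemma psi_gp: "psi = gp 1" by (auto simp: psi_def gp_def fun_eq_iff)

definition sig :: "real \<Rightarrow> real" where "sig x = psi x * inverse (psi x + psi (1 - x))"
definition SS :: "real \<Rightarrow> real" where "SS x = x * sig x"

lemma psi_nonneg: "psi x \<ge> 0" by (simp add: psi_def)
lemma psi_den: "psi x + psi (1 - x) > 0"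
  by (cases "x > 0") (auto simp: psi_def add_pos_nonneg)

lemma Ck_id: "Ck k (\<lambda>x. x)"
proof (cases k)
  case 0 then show ?thesis by simp
next
  case (Suc m)
  then show ?thesis by (auto intro!: exI[of _ "\<lambda>x. 1"] Ck_const)
qed

lemma smooth_SS: "smooth SS"
  unfolding smooth_def
proof
  fix k
  have p: "Ck k psi" by (simp add: psi_gp Ck_gp)
  have p1: "Ck k (\<lambda>x. psi ((-1) * x + 1))" by (rule Ck_affine[OF p])
  have d: "Ck k (\<lambda>x. psi x + psi (1 - x))" using Ck_add[OF p p1] by simp
  have i: "Ck k (\<lambda>x. inverse (psi x + psi (1 - x)))"
    using Ck_inverse[OF d] psi_den by (metis less_irrefl)
  have "Ck k (\<lambda>x. x * (psi x * inverse (psi x + psi (1 - x))))"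
    using Ck_mult[OF Ck_id Ck_mult[OF p i]] by simp
  moreover have "SS = (\<lambda>x. x * (psi x * inverse (psi x + psi (1 - x))))" by (simp add: fun_eq_iff SS_def sig_def)
  ultimately show "Ck k SS" by simp
qed

lemma sig_range: "0 \<le> sig x" "sig x \<le> 1"
  using psi_den[of x] psi_nonneg[of x] psi_nonneg[of "1-x"]
  by (auto simp: sig_def field_simps)

lemma SS_neg: "x \<le> 0 \<Longrightarrow> SS x = 0" by (simp add: SS_def sig_def psi_def)
lemma SS_big: "x \<ge> 1 \<Longrightarrow> SS x = x"
  using psi_den[of x] by (simp add: SS_def sig_def psi_def)
lemma SS_bounds: "0 \<le> SS x" "SS x \<le> max 0 x"
proof -
  have "0 \<le> SS x \<and> SS x \<le> max 0 x"
  proof (cases "x \<le> 0")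
    case True then show ?thesis using SS_neg by simp
  next
    case False
    then have "x * sig x \<le> x * 1" using sig_range[of x] by (intro mult_left_mono) auto
    then show ?thesis using False sig_range[of x] by (simp add: SS_def)
  qed
  then show "0 \<le> SS x" "SS x \<le> max 0 x" by auto
qed

abbreviation "SSd \<equiv> deriv SS"

lemma SS_DERIV: "(SS has_real_derivative SSd x) (at x)"
  using smooth_DERIV[OF smooth_SS] .

lemma SSd_DERIV: "(SSd has_real_derivative deriv SSd x) (at x)"
  using smooth_DERIV[OF smooth_deriv[OF smooth_SS]] .

lemma SSd_cont: "continuous_on UNIV SSd"
  using SSd_DERIV by (meson DERIV_continuous continuous_at_imp_continuous_on)

lemma SSd_meas[measurable]: "SSd \<in> borel_measurable borel"
  using SSd_cont by (rule borel_measurable_continuous_onI)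

lemma SSd_neg: "x < 0 \<Longrightarrow> SSd x = 0"
proof -
  assume x: "x < 0"
  have "((\<lambda>x. 0) has_real_derivative 0) (at x)" by simp
  then have "(SS has_real_derivative 0) (at x)"
    by (rule has_field_derivative_transform_within_open[where S="{..<0}"]) (use x SS_neg in auto)
  then show ?thesis using SS_DERIV DERIV_unique by blast
qed

lemma SSd_big: "x > 1 \<Longrightarrow> SSd x = 1"
proof -
  assume x: "x > 1"
  have "((\<lambda>x. x) has_real_derivative 1) (at x)" by (rule DERIV_ident)
  then have "(SS has_real_derivative 1) (at x)"
    by (rule has_field_derivative_transform_within_open[where S="{1<..}"]) (use x SS_big in auto)
  then show ?thesis using SS_DERIV DERIV_unique by blast
qed

lemma SSd_bounded: "\<exists>K>0. \<forall>x. \<bar>SSd x\<bar> \<le> K"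
proof -
  have "compact (SSd ` {0..1})"
    by (rule compact_continuous_image) (use SSd_cont continuous_on_subset in auto)
  then obtain M where M: "\<forall>y\<in>SSd ` {0..1}. norm y \<le> M" using compact_imp_bounded bounded_iff by metis
  have "\<bar>SSd x\<bar> \<le> max M 1" for x
  proof -
    consider "x < 0" | "x \<in> {0..1}" | "x > 1" by force
    then show ?thesis
    proof cases
      case 1 then show ?thesis using SSd_neg by simp
    next
      case 2 then show ?thesis using M by force
    next
      case 3 then show ?thesis using SSd_big by simp
    qed
  qed
  then show ?thesis by (intro exI[of _ "max M 1"]) auto
qed

lemma SSd_lim:
  assumes "x \<noteq> a"
  shows "(\<lambda>n. SSd (real (Suc n) * x - real (Suc n) * a)) \<longlonglongrightarrow> (if a < x then 1 else 0)"
proof (cases "a < x")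
  case True
  obtain N where N: "real N > 1 / (x - a)" using reals_Archimedean2 by blast
  have "eventually (\<lambda>n. SSd (real (Suc n) * x - real (Suc n) * a) = 1) sequentially"
  proof (rule eventually_sequentiallyI[of N])
    fix n assume "N \<le> n"
    then have "real (Suc n) > 1 / (x - a)" using N by linarith
    then have "real (Suc n) * (x - a) > 1" using True by (simp add: field_simps)
    then show "SSd (real (Suc n) * x - real (Suc n) * a) = 1" by (intro SSd_big) (simp add: algebra_simps)
  qed
  then show ?thesis using True by (simp add: tendsto_eventually)
next
  case False
  then have "x < a" using assms by simp
  then have "SSd (real (Suc n) * x - real (Suc n) * a) = 0" for n
    by (intro SSd_neg) (simp add: right_diff_distrib[symmetric] mult_pos_neg del: of_nat_Suc)
  then show ?thesis using False by simp
qed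

lemma smooth_scaled: "smooth f \<Longrightarrow> smooth (\<lambda>x. c * f (a * x + b))"
  unfolding smooth_def using Ck_mult[OF Ck_const Ck_affine] by blast

lemma smooth_add: "smooth f \<Longrightarrow> smooth g \<Longrightarrow> smooth (\<lambda>x. f x + g x)"
  unfolding smooth_def using Ck_add by blast

definition phi :: "real \<Rightarrow> real \<Rightarrow> real \<Rightarrow> real \<Rightarrow> real \<Rightarrow> real \<Rightarrow> real" where
  "phi n a b p q x =
    (SS (n * x - n * a) - SS (n * x - n * b)) / (n * (b - a))
    - (SS (n * x - n * p) - SS (n * x - n * q)) / (n * (q - p))"

definition dphi :: "real \<Rightarrow> real \<Rightarrow> real \<Rightarrow> real \<Rightarrow> real \<Rightarrow> real \<Rightarrow> real" where
  "dphi n a b p q x =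
    (SSd (n * x - n * a) - SSd (n * x - n * b)) / (b - a)
    - (SSd (n * x - n * p) - SSd (n * x - n * q)) / (q - p)"

lemma phi_DERIV:
  assumes "n > 0" "a < b" "p < q"
  shows "(phi n a b p q has_real_derivative dphi n a b p q x) (at x)"
proof -
  have d: "((\<lambda>x. SS (n * x - n * c)) has_real_derivative SSd (n * x - n * c) * n) (at x)" for c
  proof -
    have lin: "((\<lambda>x. n*x - n*c) has_real_derivative n) (at x)" by (auto intro!: derivative_eq_intros)
    show ?thesis using DERIV_chain2[OF SS_DERIV lin] by simp
  qed
  have "(phi n a b p q has_real_derivative
     (SSd (n * x - n * a) * n - SSd (n * x - n * b) * n) / (n * (b - a))
    - (SSd (n * x - n * p) * n - SSd (n * x - n * q) * n) / (n * (q - p))) (at x)"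
    unfolding phi_def[abs_def] by (intro DERIV_diff DERIV_cdivide d)
  moreover have "(SSd (n * x - n * a) * n - SSd (n * x - n * b) * n) / (n * (b - a))
    - (SSd (n * x - n * p) * n - SSd (n * x - n * q) * n) / (n * (q - p)) = dphi n a b p q x"
    unfolding dphi_def using assms by (simp add: left_diff_distrib[symmetric])
  ultimately show ?thesis by simp
qed

lemma phi_smooth:
  shows "smooth (phi n a b p q)"
proof -
  have s: "smooth (\<lambda>x. c * SS (n * x + (- n * d)))" for c d
    by (rule smooth_scaled[OF smooth_SS])
  have "smooth (\<lambda>x. (1 / (n * (b - a))) * SS (n * x + (- n * a)) + ((- 1 / (n * (b - a))) * SS (n * x + (- n * b))
     + ((- 1 / (n * (q - p))) * SS (n * x + (- n * p)) + (1 / (n * (q - p))) * SS (n * x + (- n * q)))))"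
    by (intro smooth_add s)
  moreover have "phi n a b p q = (\<lambda>x. (1 / (n * (b - a))) * SS (n * x + (- n * a)) + ((- 1 / (n * (b - a))) * SS (n * x + (- n * b))
     + ((- 1 / (n * (q - p))) * SS (n * x + (- n * p)) + (1 / (n * (q - p))) * SS (n * x + (- n * q)))))"
    by (auto simp: fun_eq_iff phi_def diff_divide_distrib)
  ultimately show ?thesis by simp
qed

lemma phi_support:
  assumes "n \<ge> 1" "a < b" "p < q" "\<bar>x\<bar> > \<bar>a\<bar> + \<bar>b\<bar> + \<bar>p\<bar> + \<bar>q\<bar> + 1"
  shows "phi n a b p q x = 0" "dphi n a b p q x = 0"
proof -
  have "x < - (\<bar>a\<bar> + \<bar>b\<bar> + \<bar>p\<bar> + \<bar>q\<bar> + 1) \<or> x > \<bar>a\<bar> + \<bar>b\<bar> + \<bar>p\<bar> + \<bar>q\<bar> + 1" using assms(4) by linarith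
  then have "phi n a b p q x = 0 \<and> dphi n a b p q x = 0"
  proof
    assume x: "x < - (\<bar>a\<bar> + \<bar>b\<bar> + \<bar>p\<bar> + \<bar>q\<bar> + 1)"
    have neg: "n * x - n * c < 0" if "\<bar>c\<bar> \<le> \<bar>a\<bar> + \<bar>b\<bar> + \<bar>p\<bar> + \<bar>q\<bar>" for c
    proof -
      have "x - c < 0" using x that by linarith
      then show ?thesis using assms(1) by (simp add: right_diff_distrib[symmetric] mult_pos_neg)
    qed
    have n: "n * x - n * a < 0" "n * x - n * b < 0" "n * x - n * p < 0" "n * x - n * q < 0"
      by (rule neg; linarith)+
    show ?thesis unfolding phi_def dphi_def
      using n SS_neg SSd_neg by (simp add: less_imp_le)
  next
    assume x: "x > \<bar>a\<bar> + \<bar>b\<bar> + \<bar>p\<bar> + \<bar>q\<bar> + 1"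
    have big: "n * x - n * c > 1" if "\<bar>c\<bar> \<le> \<bar>a\<bar> + \<bar>b\<bar> + \<bar>p\<bar> + \<bar>q\<bar>" for c
    proof -
      have "x - c > 1" using x that by linarith
      then have "n * (x - c) \<ge> 1 * (x - c)" using assms(1) by (intro mult_right_mono) auto
      then show ?thesis using \<open>x - c > 1\<close> by (simp add: right_diff_distrib)
    qed
    have n: "n * x - n * a > 1" "n * x - n * b > 1" "n * x - n * p > 1" "n * x - n * q > 1"
      by (rule big; linarith)+
    have "phi n a b p q x = (n * (b - a)) / (n * (b - a)) - (n * (q - p)) / (n * (q - p))"
      unfolding phi_def using n SS_big by (simp add: less_imp_le algebra_simps)
    also have "\<dots> = 0" using assms by simp
    finally show ?thesis unfolding dphi_def using n SSd_big by simp
  qed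
  then show "phi n a b p q x = 0" "dphi n a b p q x = 0" by auto
qed

lemma phi_test:
  assumes "n \<ge> 1" "a < b" "p < q"
  shows "test_function (phi n a b p q)" "deriv (phi n a b p q) = dphi n a b p q"
proof -
  show "test_function (phi n a b p q)"
    using phi_support(1)[OF assms] by (intro smooth_test phi_smooth) blast
  show "deriv (phi n a b p q) = dphi n a b p q"
    using phi_DERIV[of n a b p q] assms DERIV_imp_deriv by fastforce
qed

lemma locint_mult:
  fixes u g :: "real \<Rightarrow> real"
  assumes u: "u \<in> borel_measurable lborel" "\<And>R. integrable lborel (\<lambda>x. u x * indicator {-R..R} x)"
  and g: "g \<in> borel_measurable lborel" "\<And>x. \<bar>g x\<bar> \<le> C" "\<And>x. \<bar>x\<bar> > R \<Longrightarrow> g x = 0"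
  shows "integrable lborel (\<lambda>x. u x * g x)"
proof (rule Bochner_Integration.integrable_bound[where f="\<lambda>x. C * (u x * indicator {-R..R} x)"])
  show "integrable lborel (\<lambda>x. C * (u x * indicator {-R..R} x))"
    using u(2) by (rule integrable_mult_right)
  show "(\<lambda>x. u x * g x) \<in> borel_measurable lborel" using u g by measurable
  have C: "C \<ge> 0" using g(2)[of 0] by linarith
  show "AE x in lborel. norm (u x * g x) \<le> norm (C * (u x * indicator {-R..R} x))"
  proof (rule AE_I2)
    fix x
    show "norm (u x * g x) \<le> norm (C * (u x * indicator {-R..R} x))"
    proof (cases "\<bar>x\<bar> > R")
      case True then show ?thesis using g(3) by simp
    next
      case False
      then have "x \<in> {-R..R}" by auto
      have "\<bar>u x\<bar> * \<bar>g x\<bar> \<le> \<bar>u x\<bar> * C" by (rule mult_left_mono) (use g(2)[of x] in auto)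
      then show ?thesis using C \<open>x \<in> {-R..R}\<close> by (simp add: abs_mult mult.commute)
    qed
  qed
qed

lemma dBR:
  fixes u :: "real \<Rightarrow> real"
  assumes u: "u \<in> borel_measurable lborel" "\<And>R. integrable lborel (\<lambda>x. u x * indicator {-R..R} x)"
  and w: "\<And>\<phi>. test_function \<phi> \<Longrightarrow> (\<integral>x. u x * deriv \<phi> x \<partial>lborel) = 0"
  and ab: "a < b" and pq: "p < q"
  shows "(\<integral>x. u x * indicator {a<..b} x \<partial>lborel) / (b - a) = (\<integral>x. u x * indicator {p<..q} x \<partial>lborel) / (q - p)"
proof -
  define R where "R = \<bar>a\<bar> + \<bar>b\<bar> + \<bar>p\<bar> + \<bar>q\<bar> + 1"
  obtain K where K: "K > 0" "\<And>x. \<bar>SSd x\<bar> \<le> K" using SSd_bounded by blast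
  define s where "s n x = u x * dphi (real (Suc n)) a b p q x" for n x
  define f where "f x = u x * (indicator {a<..b} x / (b - a) - indicator {p<..q} x / (q - p))" for x
  define W where "W x = (2 * K / (b - a) + 2 * K / (q - p)) * \<bar>u x * indicator {-R..R} x\<bar>" for x
  have lim: "(\<lambda>n. integral\<^sup>L lborel (s n)) \<longlonglongrightarrow> integral\<^sup>L lborel f"
  proof (rule integral_dominated_convergence[where w = W])
    show "f \<in> borel_measurable lborel" unfolding f_def using u by measurable
    show "s n \<in> borel_measurable lborel" for n unfolding s_def dphi_def using u by measurable
    show "integrable lborel W" unfolding W_def using u(2) by (intro integrable_mult_right integrable_abs)
    have "AE x in lborel. x \<noteq> a \<and> x \<noteq> b \<and> x \<noteq> p \<and> x \<noteq> q"
      using AE_lborel_singleton[of a] AE_lborel_singleton[of b] AE_lborel_singleton[of p] AE_lborel_singleton[of q]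
      by eventually_elim auto
    then show "AE x in lborel. (\<lambda>n. s n x) \<longlonglongrightarrow> f x"
    proof eventually_elim
      case (elim x)
      have "(\<lambda>n. u x * (((SSd (real (Suc n) * x - real (Suc n) * a) - SSd (real (Suc n) * x - real (Suc n) * b)) / (b - a))
           - ((SSd (real (Suc n) * x - real (Suc n) * p) - SSd (real (Suc n) * x - real (Suc n) * q)) / (q - p))))
        \<longlonglongrightarrow> u x * ((((if a < x then 1 else 0) - (if b < x then 1 else 0)) / (b - a))
           - (((if p < x then 1 else 0) - (if q < x then 1 else 0)) / (q - p)))"
        using elim ab pq by (intro tendsto_intros SSd_lim) auto
      moreover have "((if a < x then 1 else 0) - (if b < x then 1 else 0)) / (b - a) = indicator {a<..b} x / (b - a)"
        using ab by (auto simp: indicator_def)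
      moreover have "((if p < x then 1 else 0) - (if q < x then 1 else 0)) / (q - p) = indicator {p<..q} x / (q - p)"
        using pq by (auto simp: indicator_def)
      ultimately show ?case unfolding s_def f_def dphi_def by simp
    qed
    show "AE x in lborel. norm (s n x) \<le> W x" for n
    proof (rule AE_I2)
      fix x
      show "norm (s n x) \<le> W x"
      proof (cases "\<bar>x\<bar> > R")
        case True
        then have "dphi (real (Suc n)) a b p q x = 0"
          using phi_support(2)[of "real (Suc n)" a b p q x] ab pq by (simp add: R_def)
        then show ?thesis unfolding s_def W_def using K ab pq by simp
      next
        case False
        have d1: "\<bar>(SSd (real (Suc n) * x - real (Suc n) * a) - SSd (real (Suc n) * x - real (Suc n) * b))\<bar> \<le> 2 * K"
          using K(2)[of "real (Suc n) * x - real (Suc n) * a"] K(2)[of "real (Suc n) * x - real (Suc n) * b"] by linarith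
        have d2: "\<bar>(SSd (real (Suc n) * x - real (Suc n) * p) - SSd (real (Suc n) * x - real (Suc n) * q))\<bar> \<le> 2 * K"
          using K(2)[of "real (Suc n) * x - real (Suc n) * p"] K(2)[of "real (Suc n) * x - real (Suc n) * q"] by linarith
        have "\<bar>dphi (real (Suc n)) a b p q x\<bar> \<le> 2 * K / (b - a) + 2 * K / (q - p)"
        proof -
          have "\<bar>dphi (real (Suc n)) a b p q x\<bar> \<le>
              \<bar>(SSd (real (Suc n) * x - real (Suc n) * a) - SSd (real (Suc n) * x - real (Suc n) * b))\<bar> / (b - a)
            + \<bar>(SSd (real (Suc n) * x - real (Suc n) * p) - SSd (real (Suc n) * x - real (Suc n) * q))\<bar> / (q - p)"
            unfolding dphi_def using ab pq
              abs_triangle_ineq4[of "(SSd (real (Suc n) * x - real (Suc n) * a) - SSd (real (Suc n) * x - real (Suc n) * b)) / (b - a)"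
                 "(SSd (real (Suc n) * x - real (Suc n) * p) - SSd (real (Suc n) * x - real (Suc n) * q)) / (q - p)"]
            by (simp add: abs_divide)
          also have "\<dots> \<le> 2 * K / (b - a) + 2 * K / (q - p)"
            using d1 d2 ab pq by (intro add_mono divide_right_mono) auto
          finally show ?thesis .
        qed
        moreover have "x \<in> {-R..R}" using False by auto
        ultimately have "\<bar>u x\<bar> * \<bar>dphi (real (Suc n)) a b p q x\<bar> \<le> \<bar>u x\<bar> * (2 * K / (b - a) + 2 * K / (q - p))"
          by (intro mult_left_mono) auto
        then show ?thesis unfolding s_def W_def using \<open>x \<in> {-R..R}\<close>
          by (simp add: abs_mult mult.commute)
      qed
    qed
  qed
  have s0: "integral\<^sup>L lborel (s n) = 0" for n
  proof -
    have "test_function (phi (real (Suc n)) a b p q)" "deriv (phi (real (Suc n)) a b p q) = dphi (real (Suc n)) a b p q"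
      using phi_test[of "real (Suc n)" a b p q] ab pq by auto
    then show ?thesis using w[of "phi (real (Suc n)) a b p q"] unfolding s_def by simp
  qed
  have "(\<lambda>n. 0) \<longlonglongrightarrow> integral\<^sup>L lborel f" using lim by (simp only: s0)
  then have "integral\<^sup>L lborel f = 0" using LIMSEQ_unique[OF tendsto_const] by metis
  moreover
  have i1: "integrable lborel (\<lambda>x. u x * indicator {a<..b} x)"
    by (rule locint_mult[OF u, where C=1 and R=R]) (auto simp: R_def indicator_def)
  have i2: "integrable lborel (\<lambda>x. u x * indicator {p<..q} x)"
    by (rule locint_mult[OF u, where C=1 and R=R]) (auto simp: R_def indicator_def)
  have "integral\<^sup>L lborel f = (\<integral>x. u x * indicator {a<..b} x \<partial>lborel) / (b - a) - (\<integral>x. u x * indicator {p<..q} x \<partial>lborel) / (q - p)"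
  proof -
    have "integral\<^sup>L lborel f = (\<integral>x. u x * indicator {a<..b} x / (b - a) - u x * indicator {p<..q} x / (q - p) \<partial>lborel)"
      unfolding f_def by (simp add: right_diff_distrib)
    also have "\<dots> = (\<integral>x. u x * indicator {a<..b} x / (b - a) \<partial>lborel) - (\<integral>x. u x * indicator {p<..q} x / (q - p) \<partial>lborel)"
      by (intro Bochner_Integration.integral_diff integrable_divide i1 i2)
    finally show ?thesis by simp
  qed
  ultimately show ?thesis by simp
qed

lemma ae_zero_intervals:
  fixes v :: "real \<Rightarrow> real"
  assumes v: "v \<in> borel_measurable lborel" "\<And>R. integrable lborel (\<lambda>x. v x * indicator {-R..R} x)"
    and z: "\<And>a b. a < b \<Longrightarrow> (\<integral>x. v x * indicator {a<..b} x \<partial>lborel) = 0"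
  shows "AE x in lborel. v x = 0"
proof -
  have z': "(\<integral>x. v x * indicator {a<..b} x \<partial>lborel) = 0" for a b
  proof (cases "a < b")
    case True then show ?thesis by (rule z)
  next
    case False then have "{a<..b} = {}" by auto
    then show ?thesis by simp
  qed
  have Gs: "sets (borel :: real measure) = sigma_sets UNIV (range greaterThan :: real set set)"
  proof -
    have "sets (borel :: real measure) = sets (sigma UNIV (range greaterThan))"
      by (rule arg_cong[OF borel_Ioi])
    then show ?thesis by simp
  qed
  have "AE x in lborel. v x * indicator {- real n<..real n} x = 0" for n :: nat
  proof -
    define w where "w x = v x * indicator {- real n<..real n} x" for x
    have wi: "integrable lborel w" unfolding w_def
      by (rule locint_mult[OF v, where C=1 and R="real n"]) (auto simp: indicator_def)
    have wm[measurable]: "w \<in> borel_measurable lborel" using wi by auto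
    have "set_lebesgue_integral lborel A w = 0" if A: "A \<in> sets lborel" for A
    proof -
      have IS: "Int_stable (range greaterThan :: real set set)"
      proof -
        have "{a<..} \<inter> {b<..} = {max a b<..}" for a b :: real by auto
        then show ?thesis by (auto simp: Int_stable_def)
      qed
      have PS: "range greaterThan \<subseteq> Pow (UNIV :: real set)" by auto
      from A have "A \<in> sigma_sets UNIV (range greaterThan)" by (simp add: Gs)
      from IS PS this show ?thesis
      proof (induction rule: sigma_sets_induct_disjoint)
        case (basic A)
        then obtain c where c: "A = {c<..}" by auto
        have "set_lebesgue_integral lborel A w = (\<integral>x. v x * indicator {max c (- real n)<..real n} x \<partial>lborel)"
          unfolding set_lebesgue_integral_def w_def c
          by (intro Bochner_Integration.integral_cong) (auto simp: indicator_def)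
        then show ?case using z' by simp
      next
        case empty then show ?case by (simp add: set_lebesgue_integral_def)
      next
        case (compl A)
        have Am: "A \<in> sets lborel" using compl(1) Gs by simp
        have "set_lebesgue_integral lborel (UNIV - A) w = (\<integral>x. w x - indicator A x * w x \<partial>lborel)"
          unfolding set_lebesgue_integral_def
          by (intro Bochner_Integration.integral_cong) (auto simp: indicator_def)
        also have "\<dots> = (\<integral>x. w x \<partial>lborel) - (\<integral>x. indicator A x * w x \<partial>lborel)"
          using integrable_mult_indicator[OF Am wi]
          by (intro Bochner_Integration.integral_diff wi) simp_all
        also have "(\<integral>x. w x \<partial>lborel) = 0" unfolding w_def using z' by simp
        also have "(\<integral>x. indicator A x * w x \<partial>lborel) = 0"
          using compl(2) by (simp add: set_lebesgue_integral_def)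
        finally show ?case by simp
      next
        case (union A)
        have Am: "A i \<in> sets lborel" for i using union(2) Gs by auto
        have "set_lebesgue_integral lborel (\<Union>i. A i) w = (\<Sum>i. set_lebesgue_integral lborel (A i) w)"
        proof (rule lebesgue_integral_countable_add)
          show "A i \<in> sets lborel" for i by (rule Am)
          show "i \<noteq> j \<Longrightarrow> A i \<inter> A j = {}" for i j using union(1) by (auto simp: disjoint_family_on_def)
          have "(\<Union>i. A i) \<in> sets lborel" using Am by auto
          then show "set_integrable lborel (\<Union>i. A i) w"
            unfolding set_integrable_def using wi by (rule integrable_mult_indicator)
        qed
        then show ?case using union(3) by simp
      qed
    qed
    then have "AE x in lborel. w x = 0" by (intro sigma_finite_measure.density_zero[OF sigma_finite_lborel] wi)
    then show ?thesis by (simp add: w_def)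
  qed
  then have "AE x in lborel. \<forall>n::nat. v x * indicator {- real n<..real n} x = 0"
    by (subst AE_all_countable) (simp del: mult_eq_0_iff)
  then show ?thesis
  proof eventually_elim
    case (elim x)
    obtain n :: nat where "real n > \<bar>x\<bar>" using reals_Archimedean2 by blast
    then have "x \<in> {- real n<..real n}" by auto
    then show ?case using elim[rule_format, of n] by simp
  qed
qed

lemma int_mult_bdd:
  fixes f b :: "real \<Rightarrow> real"
  assumes "integrable lborel f" "b \<in> borel_measurable lborel" "\<And>x. \<bar>b x\<bar> \<le> 1"
  shows "integrable lborel (\<lambda>x. f x * b x)"
proof (rule Bochner_Integration.integrable_bound[where f=f])
  show "integrable lborel f" by fact
  show "(\<lambda>x. f x * b x) \<in> borel_measurable lborel" using assms by measurable
  show "AE x in lborel. norm (f x * b x) \<le> norm (f x)"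
  proof (rule AE_I2)
    fix x
    have "\<bar>f x\<bar> * \<bar>b x\<bar> \<le> \<bar>f x\<bar> * 1" using assms(3)[of x] by (intro mult_left_mono) auto
    then show "norm (f x * b x) \<le> norm (f x)" by (simp add: abs_mult)
  qed
qed

lemma L2_locint:
  fixes f :: "real \<Rightarrow> real"
  assumes f: "f \<in> borel_measurable lborel" "integrable lborel (\<lambda>x. (f x)\<^sup>2)"
  shows "integrable lborel (\<lambda>x. f x * indicator {-R..R} x)"
proof (rule Bochner_Integration.integrable_bound[where f="\<lambda>x. (f x)\<^sup>2 + indicator {-R..R} x"])
  show "integrable lborel (\<lambda>x. (f x)\<^sup>2 + indicator {-R..R} x)"
    using f(2) by (intro Bochner_Integration.integrable_add) (auto simp: emeasure_lborel_Icc_eq)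
  show "(\<lambda>x. f x * indicator {-R..R} x) \<in> borel_measurable lborel" using f by measurable
  show "AE x in lborel. norm (f x * indicator {-R..R} x) \<le> norm ((f x)\<^sup>2 + indicator {-R..R} x)"
  proof (rule AE_I2)
    fix x
    have "\<bar>f x\<bar> \<le> (f x)\<^sup>2 + 1"
    proof (cases "\<bar>f x\<bar> \<le> 1")
      case True then show ?thesis by (smt (verit) zero_le_power2)
    next
      case False
      then have "\<bar>f x\<bar> * 1 \<le> \<bar>f x\<bar> * \<bar>f x\<bar>" by (intro mult_left_mono) auto
      then show ?thesis by (simp add: power2_eq_square abs_mult_self_eq)
    qed
    then show "norm (f x * indicator {-R..R} x) \<le> norm ((f x)\<^sup>2 + indicator {-R..R} x)"
      by (auto simp: indicator_def)
  qed
qed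

lemma fubini_swap:
  fixes k f :: "real \<Rightarrow> real" and Q :: "real \<Rightarrow> real \<Rightarrow> real"
  assumes k: "integrable lborel k" and f: "integrable lborel f"
    and Qm: "(\<lambda>(x, t). Q x t) \<in> borel_measurable (lborel \<Otimes>\<^sub>M lborel)"
    and Qb: "\<And>x t. \<bar>Q x t\<bar> \<le> 1"
  shows "(\<integral>x. (\<integral>t. k x * f t * Q x t \<partial>lborel) \<partial>lborel) = (\<integral>t. (\<integral>x. k x * f t * Q x t \<partial>lborel) \<partial>lborel)"
proof -
  have km[measurable]: "k \<in> borel_measurable borel" using k by auto
  have fm[measurable]: "f \<in> borel_measurable borel" using f by auto
  have Qm'[measurable]: "(\<lambda>(x, t). Q x t) \<in> borel_measurable (borel \<Otimes>\<^sub>M borel)"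
    using Qm by (simp add: measurable_def space_pair_measure sets_pair_measure)
  have G: "(\<lambda>(x, t). k x * f t * Q x t) \<in> borel_measurable (lborel \<Otimes>\<^sub>M lborel)"
  proof -
    have "(\<lambda>p. k (fst p) * f (snd p) * (case p of (x, t) \<Rightarrow> Q x t)) \<in> borel_measurable (borel \<Otimes>\<^sub>M borel)"
      by measurable
    then show ?thesis by (simp add: case_prod_beta' measurable_def space_pair_measure sets_pair_measure)
  qed
  have "integrable (lborel \<Otimes>\<^sub>M lborel) (\<lambda>(x, t). k x * f t * Q x t)"
  proof (rule lborel_pair.Fubini_integrable[OF G])
    have m: "(\<lambda>x. \<integral>t. norm (k x * f t * Q x t) \<partial>lborel) \<in> borel_measurable lborel"
    proof -
      have "(\<lambda>x. \<integral>t. norm (k x * f t * Q x t) \<partial>lborel) \<in> borel_measurable borel"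
        by measurable
      then show ?thesis by simp
    qed
    show "integrable lborel (\<lambda>x. \<integral>t. norm (case (x, t) of (x, t) \<Rightarrow> k x * f t * Q x t) \<partial>lborel)"
    proof (rule Bochner_Integration.integrable_bound[where f="\<lambda>x. \<bar>k x\<bar> * (\<integral>t. \<bar>f t\<bar> \<partial>lborel)"])
      show "integrable lborel (\<lambda>x. \<bar>k x\<bar> * (\<integral>t. \<bar>f t\<bar> \<partial>lborel))"
        using k by (intro integrable_mult_left integrable_abs)
      show "(\<lambda>x. \<integral>t. norm (case (x, t) of (x, t) \<Rightarrow> k x * f t * Q x t) \<partial>lborel) \<in> borel_measurable lborel"
        using m by simp
      show "AE x in lborel. norm (\<integral>t. norm (case (x, t) of (x, t) \<Rightarrow> k x * f t * Q x t) \<partial>lborel)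
              \<le> norm (\<bar>k x\<bar> * (\<integral>t. \<bar>f t\<bar> \<partial>lborel))"
      proof (rule AE_I2)
        fix x
        have "(\<integral>t. norm (k x * f t * Q x t) \<partial>lborel) \<le> (\<integral>t. \<bar>k x\<bar> * \<bar>f t\<bar> \<partial>lborel)"
        proof (rule integral_mono)
          show "integrable lborel (\<lambda>t. norm (k x * f t * Q x t))"
            using int_mult_bdd[OF integrable_mult_right[OF f, of "k x"], of "Q x"] Qb
            by (intro integrable_norm) (auto simp: mult.assoc)
          show "integrable lborel (\<lambda>t. \<bar>k x\<bar> * \<bar>f t\<bar>)" using f by (intro integrable_mult_right integrable_abs)
          fix t
          have "\<bar>k x\<bar> * \<bar>f t\<bar> * \<bar>Q x t\<bar> \<le> \<bar>k x\<bar> * \<bar>f t\<bar> * 1" using Qb[of x t] by (intro mult_left_mono) auto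
          then show "norm (k x * f t * Q x t) \<le> \<bar>k x\<bar> * \<bar>f t\<bar>" by (simp add: abs_mult)
        qed
        moreover have "0 \<le> (\<integral>t. norm (k x * f t * Q x t) \<partial>lborel)" by simp
        ultimately show "norm (\<integral>t. norm (case (x, t) of (x, t) \<Rightarrow> k x * f t * Q x t) \<partial>lborel)
              \<le> norm (\<bar>k x\<bar> * (\<integral>t. \<bar>f t\<bar> \<partial>lborel))" by simp
      qed
    qed
    show "AE x in lborel. integrable lborel (\<lambda>t. case (x, t) of (x, t) \<Rightarrow> k x * f t * Q x t)"
    proof (rule AE_I2)
      fix x
      show "integrable lborel (\<lambda>t. case (x, t) of (x, t) \<Rightarrow> k x * f t * Q x t)"
        using int_mult_bdd[OF integrable_mult_right[OF f, of "k x"], of "Q x"] Qb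
        by (auto simp: mult.assoc)
    qed
  qed
  then show ?thesis
    using lborel_pair.Fubini_integral[of "\<lambda>x t. k x * f t * Q x t"] by simp
qed

definition Fp :: "(real \<Rightarrow> real) \<Rightarrow> real \<Rightarrow> real" where
  "Fp g x = (\<integral>t. g t * ((if t \<le> x then 1 else 0) - (if t \<le> 0 then 1 else 0)) \<partial>lborel)"

lemma Fp_int:
  fixes g :: "real \<Rightarrow> real"
  assumes g: "g \<in> borel_measurable lborel" "integrable lborel (\<lambda>x. (g x)\<^sup>2)"
  shows "integrable lborel (\<lambda>t. g t * ((if t \<le> x then 1 else 0) - (if t \<le> 0 then 1 else 0)))"
  by (rule locint_mult[OF g(1) L2_locint[OF g], where C=1 and R="\<bar>x\<bar>"]) auto

lemma Fp_diff:
  fixes g :: "real \<Rightarrow> real"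
  assumes g: "g \<in> borel_measurable lborel" "integrable lborel (\<lambda>x. (g x)\<^sup>2)" and xy: "x \<le> y"
  shows "Fp g y - Fp g x = (\<integral>t. g t * indicator {x<..y} t \<partial>lborel)"
proof -
  have "Fp g y - Fp g x = (\<integral>t. g t * ((if t \<le> y then 1 else 0) - (if t \<le> 0 then 1 else 0))
      - g t * ((if t \<le> x then 1 else 0) - (if t \<le> 0 then 1 else 0)) \<partial>lborel)"
    unfolding Fp_def by (rule Bochner_Integration.integral_diff[symmetric]) (intro Fp_int[OF g])+
  also have "\<dots> = (\<integral>t. g t * indicator {x<..y} t \<partial>lborel)"
    using xy by (intro Bochner_Integration.integral_cong) (auto simp: indicator_def)
  finally show ?thesis .
qed

lemma Fp_meas:
  fixes g :: "real \<Rightarrow> real"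
  assumes g: "g \<in> borel_measurable lborel"
  shows "Fp g \<in> borel_measurable borel"
proof -
  have [measurable]: "g \<in> borel_measurable borel" using g by simp
  show ?thesis unfolding Fp_def[abs_def] by measurable
qed

lemma Fp_bound:
  fixes g :: "real \<Rightarrow> real"
  assumes g: "g \<in> borel_measurable lborel" "integrable lborel (\<lambda>x. (g x)\<^sup>2)" and x: "\<bar>x\<bar> \<le> R"
  shows "\<bar>Fp g x\<bar> \<le> (\<integral>t. \<bar>g t * indicator {-R..R} t\<bar> \<partial>lborel)"
  unfolding Fp_def
proof (rule integral_abs_bound_integral)
  show "integrable lborel (\<lambda>t. g t * ((if t \<le> x then 1 else 0) - (if t \<le> 0 then 1 else 0)))"
    by (rule Fp_int[OF g])
  show "integrable lborel (\<lambda>t. \<bar>g t * indicator {-R..R} t\<bar>)"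
    using L2_locint[OF g] by auto
  fix t
  show "\<bar>g t * ((if t \<le> x then 1 else 0) - (if t \<le> 0 then 1 else 0))\<bar> \<le> \<bar>g t * indicator {-R..R} t\<bar>"
    using x by (auto simp: indicator_def abs_mult)
qed

lemma test_props:
  assumes "test_function \<phi>"
  shows "\<exists>R>0. \<forall>x. \<bar>x\<bar> > R \<longrightarrow> \<phi> x = 0 \<and> deriv \<phi> x = 0"
    and "\<And>x. (\<phi> has_real_derivative deriv \<phi> x) (at x)"
    and "continuous_on UNIV (deriv \<phi>)"
proof -
  from assms obtain R0 where R0: "\<forall>x. \<bar>x\<bar> > R0 \<longrightarrow> \<phi> x = 0" and d: "\<forall>n x. ((deriv ^^ n) \<phi>) differentiable (at x)"
    unfolding test_function_def by blast
  define R where "R = \<bar>R0\<bar> + 1"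
  have R: "R > 0" "\<And>x. \<bar>x\<bar> > R \<Longrightarrow> \<phi> x = 0" using R0 by (auto simp: R_def)
  show D: "(\<phi> has_real_derivative deriv \<phi> x) (at x)" for x
    using d[rule_format, of 0 x] by (simp add: DERIV_deriv_iff_real_differentiable)
  have "deriv \<phi> x = 0" if x: "\<bar>x\<bar> > R" for x
  proof -
    have "((\<lambda>x. 0) has_real_derivative 0) (at x)" by simp
    moreover have "open {y::real. R < \<bar>y\<bar>}"
    proof -
      have "{y::real. R < \<bar>y\<bar>} = {..< -R} \<union> {R<..}" by auto
      then show ?thesis by auto
    qed
    ultimately have "(\<phi> has_real_derivative 0) (at x)"
      by (rule has_field_derivative_transform_within_open[where S="{y. \<bar>y\<bar> > R}"])
         (use x R(2) in auto)
    then show ?thesis using D DERIV_unique by blast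
  qed
  then show "\<exists>R>0. \<forall>x. \<bar>x\<bar> > R \<longrightarrow> \<phi> x = 0 \<and> deriv \<phi> x = 0" using R by blast
  have "(deriv \<phi>) differentiable (at x)" for x using d[rule_format, of 1 x] by simp
  then show "continuous_on UNIV (deriv \<phi>)"
    by (meson continuous_at_imp_continuous_on differentiable_imp_continuous_within)
qed

lemma int_mult_bddC:
  fixes f b :: "real \<Rightarrow> real"
  assumes "integrable lborel f" "b \<in> borel_measurable lborel" "\<And>x. \<bar>b x\<bar> \<le> C"
  shows "integrable lborel (\<lambda>x. f x * b x)"
proof (rule Bochner_Integration.integrable_bound[where f="\<lambda>x. C * f x"])
  show "integrable lborel (\<lambda>x. C * f x)" using assms(1) by simp
  show "(\<lambda>x. f x * b x) \<in> borel_measurable lborel" using assms by measurable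
  show "AE x in lborel. norm (f x * b x) \<le> norm (C * f x)"
  proof (rule AE_I2)
    fix x
    have C: "C \<ge> 0" using assms(3)[of x] by linarith
    have "\<bar>f x\<bar> * \<bar>b x\<bar> \<le> \<bar>f x\<bar> * C" using assms(3)[of x] by (intro mult_left_mono) auto
    then show "norm (f x * b x) \<le> norm (C * f x)" using C by (simp add: abs_mult mult.commute)
  qed
qed

lemma test_FTC:
  assumes "test_function \<phi>" "a \<le> b"
  shows "(\<integral>x. indicator {a..b} x * deriv \<phi> x \<partial>lborel) = \<phi> b - \<phi> a"
proof -
  have D: "\<And>x. (\<phi> has_real_derivative deriv \<phi> x) (at x)" and C: "continuous_on UNIV (deriv \<phi>)"
    using test_props[OF assms(1)] by auto
  have "(\<integral>x. indicator {a..b} x *\<^sub>R deriv \<phi> x \<partial>lborel) = \<phi> b - \<phi> a"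
  proof (rule integral_FTC_atLeastAtMost[OF assms(2)])
    show "(\<phi> has_vector_derivative deriv \<phi> x) (at x within {a..b})" for x
      using D[of x] by (simp add: has_real_derivative_iff_has_vector_derivative has_vector_derivative_at_within)
    show "continuous_on {a..b} (deriv \<phi>)" using C continuous_on_subset by blast
  qed
  then show ?thesis by simp
qed

lemma Fp_weak:
  fixes g :: "real \<Rightarrow> real"
  assumes g: "g \<in> borel_measurable lborel" "integrable lborel (\<lambda>x. (g x)\<^sup>2)"
    and \<phi>: "test_function \<phi>"
  shows "(\<integral>x. Fp g x * deriv \<phi> x \<partial>lborel) = - (\<integral>x. g x * \<phi> x \<partial>lborel)"
proof -
  obtain R where R: "R > 0" "\<And>x. \<bar>x\<bar> > R \<Longrightarrow> \<phi> x = 0 \<and> deriv \<phi> x = 0"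
    using test_props(1)[OF \<phi>] by blast
  have D: "\<And>x. (\<phi> has_real_derivative deriv \<phi> x) (at x)" and C: "continuous_on UNIV (deriv \<phi>)"
    using test_props[OF \<phi>] by auto
  have Cphi: "continuous_on UNIV \<phi>" using D
    by (meson DERIV_continuous continuous_at_imp_continuous_on)
  have [measurable]: "g \<in> borel_measurable borel" using g by simp
  have dm[measurable]: "deriv \<phi> \<in> borel_measurable borel" using C by (rule borel_measurable_continuous_onI)
  have pm[measurable]: "\<phi> \<in> borel_measurable borel" using Cphi by (rule borel_measurable_continuous_onI)
  define gt where "gt t = g t * indicator {-R..R} t" for t
  have gti: "integrable lborel gt" unfolding gt_def by (rule L2_locint[OF g])
  have gtm[measurable]: "gt \<in> borel_measurable borel" unfolding gt_def by measurable
  have di: "integrable lborel (deriv \<phi>)"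
  proof -
    have "set_integrable lborel {-R..R} (deriv \<phi>)"
      by (rule borel_integrable_atLeastAtMost') (use C continuous_on_subset in blast)
    then have "integrable lborel (\<lambda>x. indicator {-R..R} x * deriv \<phi> x)" by (simp add: set_integrable_def)
    moreover have "indicator {-R..R} x * deriv \<phi> x = deriv \<phi> x" for x
      using R(2)[of x] by (cases "\<bar>x\<bar> > R") (auto simp: indicator_def)
    ultimately show ?thesis by simp
  qed
  have inner: "(\<integral>x. deriv \<phi> x * gt t * (if t \<le> x then 1 else 0) \<partial>lborel) = gt t * (- \<phi> t)" for t
  proof (cases "t > R")
    case True
    then have "(\<lambda>x. deriv \<phi> x * gt t * (if t \<le> x then 1 else 0)) = (\<lambda>x. 0)"
      using R(2) by (auto simp: fun_eq_iff)
    moreover have "\<phi> t = 0" using R(2)[of t] True by auto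
    ultimately show ?thesis by (simp del: mult_eq_0_iff)
  next
    case False
    have "(\<integral>x. deriv \<phi> x * gt t * (if t \<le> x then 1 else 0) \<partial>lborel)
        = gt t * (\<integral>x. indicator {t..R+1} x * deriv \<phi> x \<partial>lborel)"
    proof -
      have "(\<lambda>x. deriv \<phi> x * gt t * (if t \<le> x then 1 else 0)) = (\<lambda>x. gt t * (indicator {t..R+1} x * deriv \<phi> x))"
        using R(2) False by (force simp: fun_eq_iff indicator_def)
      then show ?thesis by (simp only: integral_mult_right_zero)
    qed
    also have "\<dots> = gt t * (\<phi> (R+1) - \<phi> t)" using False by (subst test_FTC[OF \<phi>]) auto
    also have "\<phi> (R+1) = 0" using R by auto
    finally show ?thesis by simp
  qed
  have dint0: "(\<integral>x. deriv \<phi> x \<partial>lborel) = 0"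
  proof -
    have fe: "(\<lambda>x. indicator {-(R+1)..R+1} x * deriv \<phi> x) = deriv \<phi>"
      using R(2) by (force simp: fun_eq_iff indicator_def)
    then have "(\<integral>x. deriv \<phi> x \<partial>lborel) = (\<integral>x. indicator {-(R+1)..R+1} x * deriv \<phi> x \<partial>lborel)" by (simp only: fe)
    also have "\<dots> = \<phi> (R+1) - \<phi> (-(R+1))" using R by (subst test_FTC[OF \<phi>]) auto
    also have "\<dots> = 0" using R(1) R(2)[of "R+1"] R(2)[of "-(R+1)"] by auto
    finally show ?thesis .
  qed
  define A where "A x = (\<integral>t. gt t * (if t \<le> x then 1 else 0) \<partial>lborel)" for x
  define c where "c = (\<integral>t. gt t * (if t \<le> 0 then 1 else 0) \<partial>lborel)"
  have Am[measurable]: "A \<in> borel_measurable borel" unfolding A_def[abs_def] by measurable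
  have Ab: "\<bar>A x\<bar> \<le> (\<integral>t. \<bar>gt t\<bar> \<partial>lborel)" for x unfolding A_def
    by (rule integral_abs_bound_integral) (use gti in \<open>auto intro: int_mult_bdd simp: abs_mult\<close>)
  have eq1: "Fp g x * deriv \<phi> x = deriv \<phi> x * A x - deriv \<phi> x * c" for x
  proof (cases "\<bar>x\<bar> > R")
    case True then show ?thesis using R(2)[of x] by simp
  next
    case False
    have "Fp g x = (\<integral>t. gt t * (if t \<le> x then 1 else 0) - gt t * (if t \<le> 0 then 1 else 0) \<partial>lborel)"
      unfolding Fp_def gt_def using False by (intro Bochner_Integration.integral_cong) (auto simp: indicator_def)
    also have "\<dots> = A x - c" unfolding A_def c_def
      by (intro Bochner_Integration.integral_diff int_mult_bdd gti) auto
    finally show ?thesis by (simp add: right_diff_distrib mult.commute)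
  qed
  have i1: "integrable lborel (\<lambda>x. deriv \<phi> x * A x)"
    by (rule int_mult_bddC[OF di _ Ab]) simp
  have "(\<integral>x. Fp g x * deriv \<phi> x \<partial>lborel) = (\<integral>x. deriv \<phi> x * A x \<partial>lborel) - (\<integral>x. deriv \<phi> x * c \<partial>lborel)"
    unfolding eq1 by (intro Bochner_Integration.integral_diff i1) (use di in simp)
  also have "(\<integral>x. deriv \<phi> x * c \<partial>lborel) = 0" using dint0 by simp
  also have "(\<integral>x. deriv \<phi> x * A x \<partial>lborel) = (\<integral>x. (\<integral>t. deriv \<phi> x * gt t * (if t \<le> x then 1 else 0) \<partial>lborel) \<partial>lborel)"
    unfolding A_def by (simp add: mult.assoc)
  also have "\<dots> = (\<integral>t. (\<integral>x. deriv \<phi> x * gt t * (if t \<le> x then 1 else 0) \<partial>lborel) \<partial>lborel)"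
  proof (rule fubini_swap[OF di gti])
    show "(\<lambda>(x::real, t::real). if t \<le> x then 1 else 0 :: real) \<in> borel_measurable (lborel \<Otimes>\<^sub>M lborel)"
      by measurable
  qed auto
  also have "\<dots> = (\<integral>t. gt t * (- \<phi> t) \<partial>lborel)" by (simp only: inner)
  also have "\<dots> = - (\<integral>x. g x * \<phi> x \<partial>lborel)"
  proof -
    have "(\<lambda>t. gt t * (- \<phi> t)) = (\<lambda>t. - (g t * \<phi> t))"
      using R(2) by (force simp: fun_eq_iff gt_def indicator_def)
    then show ?thesis by (simp only: Bochner_Integration.integral_minus)
  qed
  finally show ?thesis by simp
qed

lemma test_deriv_bounded:
  assumes "test_function \<phi>"
  shows "\<exists>B. \<forall>x. \<bar>deriv \<phi> x\<bar> \<le> B"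
proof -
  obtain R where R: "R > 0" "\<And>x. \<bar>x\<bar> > R \<Longrightarrow> \<phi> x = 0 \<and> deriv \<phi> x = 0"
    using test_props(1)[OF assms] by blast
  have C: "continuous_on UNIV (deriv \<phi>)" using test_props[OF assms] by auto
  have "compact (deriv \<phi> ` {-R..R})"
    by (rule compact_continuous_image) (use C continuous_on_subset in auto)
  then obtain M where M: "\<forall>y\<in>deriv \<phi> ` {-R..R}. norm y \<le> M" using compact_imp_bounded bounded_iff by metis
  have "\<bar>deriv \<phi> x\<bar> \<le> max M 0" for x
  proof (cases "\<bar>x\<bar> > R")
    case True then show ?thesis using R(2)[of x] by simp
  next
    case False then have "x \<in> {-R..R}" by auto
    then show ?thesis using M by force
  qed
  then show ?thesis by blast
qed

lemma locint_test:
  fixes u :: "real \<Rightarrow> real"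
  assumes u: "u \<in> borel_measurable lborel" "\<And>R. integrable lborel (\<lambda>x. u x * indicator {-R..R} x)"
    and \<phi>: "test_function \<phi>"
  shows "integrable lborel (\<lambda>x. u x * deriv \<phi> x)"
proof -
  obtain R where R: "R > 0" "\<And>x. \<bar>x\<bar> > R \<Longrightarrow> \<phi> x = 0 \<and> deriv \<phi> x = 0"
    using test_props(1)[OF \<phi>] by blast
  obtain B where B: "\<And>x. \<bar>deriv \<phi> x\<bar> \<le> B" using test_deriv_bounded[OF \<phi>] by blast
  have C: "continuous_on UNIV (deriv \<phi>)" using test_props[OF \<phi>] by auto
  have "deriv \<phi> \<in> borel_measurable borel" using C by (rule borel_measurable_continuous_onI)
  then show ?thesis
    by (intro locint_mult[OF u, where C=B and R=R]) (use B R in auto)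
qed

lemma H1_repr:
  assumes H: "H1_weak_deriv h h'"
  shows "\<exists>C0. AE x in lborel. h x = Fp h' x + C0"
proof -
  have hm: "h \<in> borel_measurable lborel" and h'm: "h' \<in> borel_measurable lborel"
    and h2: "integrable lborel (\<lambda>x. (h x)\<^sup>2)" and h'2: "integrable lborel (\<lambda>x. (h' x)\<^sup>2)"
    and hw: "\<And>\<phi>. test_function \<phi> \<Longrightarrow> (\<integral>x. h x * deriv \<phi> x \<partial>lborel) = - (\<integral>x. h' x * \<phi> x \<partial>lborel)"
    using H unfolding H1_weak_deriv_def by auto
  have Fm[measurable]: "Fp h' \<in> borel_measurable borel" using Fp_meas[OF h'm] .
  have [measurable]: "h \<in> borel_measurable borel" using hm by simp
  have Floc: "integrable lborel (\<lambda>x. Fp h' x * indicator {-R..R} x)" for R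
  proof (rule Bochner_Integration.integrable_bound[where f="\<lambda>x. (\<integral>t. \<bar>h' t * indicator {-\<bar>R\<bar>..\<bar>R\<bar>} t\<bar> \<partial>lborel) * indicator {-R..R} x"])
    show "integrable lborel (\<lambda>x. (\<integral>t. \<bar>h' t * indicator {-\<bar>R\<bar>..\<bar>R\<bar>} t\<bar> \<partial>lborel) * indicator {-R..R} x)"
      by (intro integrable_mult_right) (auto simp: emeasure_lborel_Icc_eq)
    show "(\<lambda>x. Fp h' x * indicator {-R..R} x) \<in> borel_measurable lborel" by measurable
    show "AE x in lborel. norm (Fp h' x * indicator {-R..R} x)
        \<le> norm ((\<integral>t. \<bar>h' t * indicator {-\<bar>R\<bar>..\<bar>R\<bar>} t\<bar> \<partial>lborel) * indicator {-R..R} x)"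
    proof (rule AE_I2)
      fix x
      show "norm (Fp h' x * indicator {-R..R} x)
        \<le> norm ((\<integral>t. \<bar>h' t * indicator {-\<bar>R\<bar>..\<bar>R\<bar>} t\<bar> \<partial>lborel) * indicator {-R..R} x)"
      proof (cases "x \<in> {-R..R}")
        case True
        then have "\<bar>x\<bar> \<le> \<bar>R\<bar>" by auto
        from Fp_bound[OF h'm h'2 this] True show ?thesis by simp
      qed simp
    qed
  qed
  define u where "u x = h x - Fp h' x" for x
  have um[measurable]: "u \<in> borel_measurable borel" unfolding u_def by measurable
  have uloc: "integrable lborel (\<lambda>x. u x * indicator {-R..R} x)" for R
  proof -
    have "integrable lborel (\<lambda>x. h x * indicator {-R..R} x - Fp h' x * indicator {-R..R} x)"
      by (intro Bochner_Integration.integrable_diff Floc L2_locint[OF hm h2])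
    then show ?thesis by (simp add: u_def left_diff_distrib)
  qed
  have um': "u \<in> borel_measurable lborel" by simp
  have uw: "(\<integral>x. u x * deriv \<phi> x \<partial>lborel) = 0" if \<phi>: "test_function \<phi>" for \<phi>
  proof -
    have i1: "integrable lborel (\<lambda>x. h x * deriv \<phi> x)"
      by (rule locint_test[OF _ L2_locint[OF hm h2] \<phi>]) (use hm in simp)
    have i2: "integrable lborel (\<lambda>x. Fp h' x * deriv \<phi> x)"
      by (rule locint_test[OF _ Floc \<phi>]) simp
    have "(\<integral>x. u x * deriv \<phi> x \<partial>lborel) = (\<integral>x. h x * deriv \<phi> x - Fp h' x * deriv \<phi> x \<partial>lborel)"
      unfolding u_def by (simp add: left_diff_distrib)
    also have "\<dots> = (\<integral>x. h x * deriv \<phi> x \<partial>lborel) - (\<integral>x. Fp h' x * deriv \<phi> x \<partial>lborel)"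
      by (rule Bochner_Integration.integral_diff[OF i1 i2])
    also have "\<dots> = 0" using hw[OF \<phi>] Fp_weak[OF h'm h'2 \<phi>] by simp
    finally show ?thesis .
  qed
  define C0 where "C0 = (\<integral>x. u x * indicator {0<..1} x \<partial>lborel)"
  define v where "v x = u x - C0" for x
  have vm: "v \<in> borel_measurable lborel" unfolding v_def by simp
  have vloc: "integrable lborel (\<lambda>x. v x * indicator {-R..R} x)" for R
  proof -
    have "integrable lborel (\<lambda>x. u x * indicator {-R..R} x - C0 * indicator {-R..R} x)"
      by (intro Bochner_Integration.integrable_diff uloc integrable_mult_right) (auto simp: emeasure_lborel_Icc_eq)
    then show ?thesis by (simp add: v_def left_diff_distrib)
  qed
  have vz: "(\<integral>x. v x * indicator {a<..b} x \<partial>lborel) = 0" if ab: "a < b" for a b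
  proof -
    have d: "(\<integral>x. u x * indicator {a<..b} x \<partial>lborel) / (b - a) = C0 / (1 - 0)"
      unfolding C0_def by (rule dBR[OF um' uloc uw ab]) auto
    have iu: "integrable lborel (\<lambda>x. u x * indicator {a<..b} x)"
      by (rule locint_mult[OF um' uloc, where C=1 and R="\<bar>a\<bar> + \<bar>b\<bar>"]) (auto simp: indicator_def)
    have ic: "integrable lborel (\<lambda>x. C0 * indicator {a<..b} x)"
      using ab by (intro integrable_mult_right) auto
    have "(\<integral>x. v x * indicator {a<..b} x \<partial>lborel) = (\<integral>x. u x * indicator {a<..b} x - C0 * indicator {a<..b} x \<partial>lborel)"
      unfolding v_def by (simp add: left_diff_distrib)
    also have "\<dots> = (\<integral>x. u x * indicator {a<..b} x \<partial>lborel) - C0 * (b - a)"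
      using ab by (subst Bochner_Integration.integral_diff[OF iu ic]) simp
    also have "(\<integral>x. u x * indicator {a<..b} x \<partial>lborel) = C0 * (b - a)" using d ab by (simp add: field_simps)
    finally show ?thesis by simp
  qed
  have "AE x in lborel. v x = 0" by (rule ae_zero_intervals[OF vm vloc vz])
  then have "AE x in lborel. h x = Fp h' x + C0"
    by eventually_elim (simp add: v_def u_def)
  then show ?thesis by blast
qed

lemma exp_tail:
  fixes c s :: real
  assumes c: "c > 0" and s: "s \<ge> 0"
  shows "has_bochner_integral lborel (\<lambda>x. exp (- c * \<bar>x\<bar>) * indicator {s..} x) (exp (- c * s) / c)"
proof (rule has_bochner_integral_nn_integral)
  show "(\<lambda>x. exp (- c * \<bar>x\<bar>) * indicator {s..} x) \<in> borel_measurable lborel" by measurable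
  show "AE x in lborel. 0 \<le> exp (- c * \<bar>x\<bar>) * indicator {s..} x" by simp
  show "0 \<le> exp (- c * s) / c" using c by simp
  have hk: "((\<lambda>x. exp (- c * x)) has_integral exp (- c * s) / c) {s..}"
    by (rule has_integral_exp_minus_to_infinity[OF c])
  then have "((\<lambda>x. if x \<in> {s..} then exp (- c * x) else 0) has_integral exp (- c * s) / c) UNIV"
    by (simp only: has_integral_restrict_UNIV)
  moreover have "(\<lambda>x. if x \<in> {s..} then exp (- c * x) else 0) = (\<lambda>x. exp (- c * \<bar>x\<bar>) * indicator {s..} x)"
    using s by (auto simp: fun_eq_iff indicator_def)
  ultimately have "((\<lambda>x. exp (- c * \<bar>x\<bar>) * indicator {s..} x) has_integral exp (- c * s) / c) UNIV" by simp
  then show "(\<integral>\<^sup>+x. ennreal (exp (- c * \<bar>x\<bar>) * indicator {s..} x) \<partial>lborel) = ennreal (exp (- c * s) / c)"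
    by (intro nn_integral_has_integral_lborel) auto
qed

lemma exp_tail_left:
  fixes c s :: real
  assumes c: "c > 0" and s: "s \<le> 0"
  shows "has_bochner_integral lborel (\<lambda>x. exp (- c * \<bar>x\<bar>) * indicator {..<s} x) (exp (c * s) / c)"
proof -
  have "has_bochner_integral lborel (\<lambda>x. exp (- c * \<bar>x\<bar>) * indicator {-s..} x) (exp (- c * (-s)) / c)"
    using exp_tail[OF c, of "-s"] s by (simp del: mult_minus_left)
  then have "has_bochner_integral lborel (\<lambda>x. exp (- c * \<bar>x\<bar>) * indicator {-s<..} x) (exp (- c * (-s)) / c)"
    by (rule has_bochner_integral_discrete_difference[where X="{-s}", THEN iffD1, rotated 4])
       (auto simp: indicator_def)
  then have "has_bochner_integral lborel (\<lambda>x. exp (- c * \<bar>0 + (-1) * x\<bar>) * indicator {..<s} (0 + (-1) * x)) ((exp (c * s) / c) /\<^sub>R \<bar>-1\<bar>)"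
  proof -
    assume a: "has_bochner_integral lborel (\<lambda>x. exp (- c * \<bar>x\<bar>) * indicator {-s<..} x) (exp (- c * (-s)) / c)"
    have "(\<lambda>x. exp (- c * \<bar>0 + (-1) * x\<bar>) * indicator {..<s} (0 + (-1) * x)) = (\<lambda>x. exp (- c * \<bar>x\<bar>) * indicator {-s<..} x)"
      by (auto simp: fun_eq_iff indicator_def)
    then show ?thesis using a by simp
  qed
  then show ?thesis
    by (subst lborel_has_bochner_integral_real_affine_iff[where c="-1" and t=0]) auto
qed

lemma exp_total:
  fixes c :: real
  assumes c: "c > 0"
  shows "has_bochner_integral lborel (\<lambda>x. exp (- c * \<bar>x\<bar>)) (2 / c)"
proof -
  have "has_bochner_integral lborel (\<lambda>x. indicator {0..} x *\<^sub>R exp (- c * \<bar>x\<bar>)) (1 / c)"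
    using exp_tail[OF c, of 0] by (simp add: mult.commute del: mult_minus_left)
  from has_bochner_integral_even_function[OF this] show ?thesis by simp
qed

lemma exp_integrable: "(c::real) > 0 \<Longrightarrow> integrable lborel (\<lambda>x::real. exp (- c * \<bar>x\<bar>))"
  using exp_total has_bochner_integral_iff by blast

lemma exp_integral: "(c::real) > 0 \<Longrightarrow> (\<integral>x. exp (- c * \<bar>x::real\<bar>) \<partial>lborel) = 2 / c"
  using exp_total has_bochner_integral_iff by blast

definition bt :: "real \<Rightarrow> real \<Rightarrow> real" where
  "bt x t = (if 0 < t \<and> t \<le> x then 1 else if x < t \<and> t \<le> 0 then 1 else 0)"

lemma bt_meas: "(\<lambda>(x::real, t::real). bt x t) \<in> borel_measurable (lborel \<Otimes>\<^sub>M lborel)"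
  unfolding bt_def by measurable

lemma inner_exp:
  fixes c t :: real
  assumes c: "c > 0"
  shows "(\<integral>x. exp (- c * \<bar>x\<bar>) * bt x t \<partial>lborel) = exp (- c * \<bar>t\<bar>) / c"
proof (cases "t > 0")
  case True
  have "(\<lambda>x. exp (- c * \<bar>x\<bar>) * bt x t) = (\<lambda>x. exp (- c * \<bar>x\<bar>) * indicator {t..} x)"
    using True by (auto simp: fun_eq_iff bt_def indicator_def)
  then show ?thesis using exp_tail[OF c, of t] True has_bochner_integral_iff by auto
next
  case False
  have "(\<lambda>x. exp (- c * \<bar>x\<bar>) * bt x t) = (\<lambda>x. exp (- c * \<bar>x\<bar>) * indicator {..<t} x)"
    using False by (auto simp: fun_eq_iff bt_def indicator_def)
  then show ?thesis using exp_tail_left[OF c, of t] False has_bochner_integral_iff by auto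
qed

lemma Gs_fubini:
  fixes g :: "real \<Rightarrow> real" and c :: real
  assumes c: "c > 0" and g: "integrable lborel g"
  shows "(\<integral>x. exp (- c * \<bar>x\<bar>) * (\<integral>t. g t * bt x t \<partial>lborel) \<partial>lborel) = (\<integral>t. g t * exp (- c * \<bar>t\<bar>) \<partial>lborel) / c"
proof -
  have "(\<integral>x. exp (- c * \<bar>x\<bar>) * (\<integral>t. g t * bt x t \<partial>lborel) \<partial>lborel)
      = (\<integral>x. (\<integral>t. exp (- c * \<bar>x\<bar>) * g t * bt x t \<partial>lborel) \<partial>lborel)"
    by (simp add: mult.assoc)
  also have "\<dots> = (\<integral>t. (\<integral>x. exp (- c * \<bar>x\<bar>) * g t * bt x t \<partial>lborel) \<partial>lborel)"
    by (rule fubini_swap[OF exp_integrable[OF c] g bt_meas]) (auto simp: bt_def)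
  also have "\<dots> = (\<integral>t. g t * (\<integral>x. exp (- c * \<bar>x\<bar>) * bt x t \<partial>lborel) \<partial>lborel)"
  proof -
    have "(\<lambda>x. exp (- c * \<bar>x\<bar>) * g t * bt x t) = (\<lambda>x. g t * (exp (- c * \<bar>x\<bar>) * bt x t))" for t
      by (auto simp: fun_eq_iff)
    then show ?thesis by (simp only: integral_mult_right_zero)
  qed
  also have "\<dots> = (\<integral>t. g t * exp (- c * \<bar>t\<bar>) / c \<partial>lborel)"
    by (simp only: inner_exp[OF c] times_divide_eq_right)
  also have "\<dots> = (\<integral>t. g t * exp (- c * \<bar>t\<bar>) \<partial>lborel) / c" by simp
  finally show ?thesis .
qed

lemma sq_FTC:
  fixes H g :: "real \<Rightarrow> real" and x y :: real
  assumes gm: "g \<in> borel_measurable lborel" and gloc: "\<And>R. integrable lborel (\<lambda>t. g t * indicator {-R..R} t)"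
    and Hm: "H \<in> borel_measurable lborel"
    and HD: "\<And>a b. a \<le> b \<Longrightarrow> H b - H a = (\<integral>t. g t * indicator {a<..b} t \<partial>lborel)"
    and xy: "x \<le> y"
  shows "(\<integral>t. 2 * H t * g t * indicator {x<..y} t \<partial>lborel) = (H y)\<^sup>2 - (H x)\<^sup>2"
proof -
  have [measurable]: "g \<in> borel_measurable borel" "H \<in> borel_measurable borel" using gm Hm by auto
  define gD where "gD t = g t * indicator {x<..y} t" for t
  have gDm[measurable]: "gD \<in> borel_measurable borel" unfolding gD_def by measurable
  have gDi: "integrable lborel gD" unfolding gD_def
    by (rule locint_mult[OF gm gloc, where C=1 and R="\<bar>x\<bar> + \<bar>y\<bar>"]) (auto simp: indicator_def)
  have sub: "(\<integral>s. g s * indicator {x<..y} s * (if s \<le> t then 1 else 0) \<partial>lborel) = H t - H x"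
    if t: "t \<in> {x<..y}" for t
  proof -
    have "(\<lambda>s. g s * indicator {x<..y} s * (if s \<le> t then 1 else 0)) = (\<lambda>s. g s * indicator {x<..t} s)"
      using t by (auto simp: fun_eq_iff indicator_def)
    then show ?thesis using HD[of x t] t by simp
  qed
  define M where "M = \<bar>H x\<bar> + (\<integral>s. \<bar>gD s\<bar> \<partial>lborel)"
  have Hb: "\<bar>H t * indicator {x<..y} t\<bar> \<le> M" for t
  proof (cases "t \<in> {x<..y}")
    case True
    have "\<bar>H t - H x\<bar> \<le> (\<integral>s. \<bar>gD s\<bar> \<partial>lborel)"
      unfolding sub[OF True, symmetric]
    proof (rule integral_abs_bound_integral)
      show "integrable lborel (\<lambda>s. g s * indicator {x<..y} s * (if s \<le> t then 1 else 0))"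
        using int_mult_bdd[OF gDi, of "\<lambda>s. if s \<le> t then 1 else 0"] by (simp add: gD_def)
      show "integrable lborel (\<lambda>s. \<bar>gD s\<bar>)" using gDi by auto
      show "\<bar>g s * indicator {x<..y} s * (if s \<le> t then 1 else 0)\<bar> \<le> \<bar>gD s\<bar>" for s
        by (auto simp: gD_def abs_mult)
    qed
    then show ?thesis using True by (simp add: M_def)
  next
    case False then show ?thesis by (simp add: M_def)
  qed
  have gDH: "integrable lborel (\<lambda>t. gD t * (H t * indicator {x<..y} t))"
    by (rule int_mult_bddC[OF gDi _ Hb]) simp
  have eqH: "gD t * (H t * indicator {x<..y} t) = gD t * H t" for t by (auto simp: gD_def indicator_def)
  have gDH': "integrable lborel (\<lambda>t. gD t * H t)" using gDH by (simp add: eqH)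
  have F: "(\<integral>t. (\<integral>s. gD t * gD s * (if s \<le> t then 1 else 0) \<partial>lborel) \<partial>lborel)
      = (\<integral>s. (\<integral>t. gD t * gD s * (if s \<le> t then 1 else 0) \<partial>lborel) \<partial>lborel)"
  proof (rule fubini_swap[OF gDi gDi])
    show "(\<lambda>(t::real, s::real). if s \<le> t then 1 else 0 :: real) \<in> borel_measurable (lborel \<Otimes>\<^sub>M lborel)"
      by measurable
  qed auto
  have L: "(\<integral>s. gD t * gD s * (if s \<le> t then 1 else 0) \<partial>lborel) = gD t * H t - H x * gD t" for t
  proof (cases "t \<in> {x<..y}")
    case True
    have "(\<integral>s. gD t * gD s * (if s \<le> t then 1 else 0) \<partial>lborel) = gD t * (\<integral>s. g s * indicator {x<..y} s * (if s \<le> t then 1 else 0) \<partial>lborel)"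
      by (simp add: gD_def mult.assoc)
    also have "\<dots> = gD t * (H t - H x)" using sub[OF True] by simp
    finally show ?thesis by (simp add: algebra_simps)
  next
    case False then show ?thesis by (simp add: gD_def)
  qed
  have R: "(\<integral>t. gD t * gD s * (if s \<le> t then 1 else 0) \<partial>lborel) = H y * gD s - gD s * H s" for s
  proof (cases "s \<in> {x<..y}")
    case True
    have "(\<integral>t. gD t * gD s * (if s \<le> t then 1 else 0) \<partial>lborel) = gD s * (\<integral>t. g t * indicator {s<..y} t \<partial>lborel)"
    proof -
      have "(\<integral>t. gD t * gD s * (if s \<le> t then 1 else 0) \<partial>lborel) = (\<integral>t. gD s * (g t * indicator {s<..y} t) \<partial>lborel)"
      proof (rule integral_cong_AE)
        show "(\<lambda>t. gD t * gD s * (if s \<le> t then 1 else 0)) \<in> borel_measurable lborel" by measurable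
        show "(\<lambda>t. gD s * (g t * indicator {s<..y} t)) \<in> borel_measurable lborel" by measurable
        show "AE t in lborel. gD t * gD s * (if s \<le> t then 1 else 0) = gD s * (g t * indicator {s<..y} t)"
          using AE_lborel_singleton[of s]
        proof eventually_elim
          case (elim t)
          then show ?case using True by (auto simp: gD_def indicator_def)
        qed
      qed
      then show ?thesis by simp
    qed
    also have "\<dots> = gD s * (H y - H s)" using HD[of s y] True by simp
    finally show ?thesis by (simp add: algebra_simps)
  next
    case False then show ?thesis by (simp add: gD_def)
  qed
  define P where "P = (\<integral>t. gD t * H t \<partial>lborel)"
  define D where "D = (\<integral>t. gD t \<partial>lborel)"
  have D: "D = H y - H x" using HD[OF xy] by (simp add: D_def gD_def)
  have "(\<integral>t. gD t * H t - H x * gD t \<partial>lborel) = P - H x * D"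
    unfolding P_def D_def using gDH' gDi by (simp add: Bochner_Integration.integral_diff)
  moreover have "(\<integral>s. H y * gD s - gD s * H s \<partial>lborel) = H y * D - P"
    unfolding P_def D_def using gDH' gDi by (simp add: Bochner_Integration.integral_diff)
  ultimately have "P - H x * D = H y * D - P" using F by (simp only: L R)
  then have "2 * P = (H x + H y) * D" by (simp add: algebra_simps)
  also have "\<dots> = (H y)\<^sup>2 - (H x)\<^sup>2" unfolding D by (simp add: power2_eq_square algebra_simps)
  finally have P2: "2 * P = (H y)\<^sup>2 - (H x)\<^sup>2" .
  have "(\<integral>t. 2 * H t * g t * indicator {x<..y} t \<partial>lborel) = (\<integral>t. 2 * (gD t * H t) \<partial>lborel)"
    by (rule Bochner_Integration.integral_cong) (auto simp: gD_def)
  also have "\<dots> = 2 * P" unfolding P_def by simp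
  finally show ?thesis using P2 by simp
qed

theorem lemma5:
  fixes c :: real and Y h h' :: "real \<Rightarrow> real"
  assumes "0 < c" and "c < 1"
    and "Y \<in> borel_measurable lborel"
    and "\<forall>x. \<bar>Y x\<bar> \<le> exp (- \<bar>x\<bar>)"
    and "(\<integral>x. Y x \<partial>lborel) > 0"
    and "H1_weak_deriv h h'"
  shows "(\<integral>x. exp (- c * \<bar>x\<bar>) * (h x)\<^sup>2 \<partial>lborel)
         \<le> 4 / (c * (\<integral>x. Y x \<partial>lborel)) * (\<integral>x. Y x * (h x)\<^sup>2 \<partial>lborel)
           + 64 / (c\<^sup>2 * (\<integral>x. Y x \<partial>lborel)\<^sup>2) * (\<integral>x. (h' x)\<^sup>2 \<partial>lborel)"
proof -
  note c = assms(1) and c1 = assms(2) and Ym = assms(3) and Yb = assms(4) and Ipos = assms(5) and H1 = assms(6)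
  have hm: "h \<in> borel_measurable lborel" and h'm: "h' \<in> borel_measurable lborel"
    and h2: "integrable lborel (\<lambda>x. (h x)\<^sup>2)" and h'2: "integrable lborel (\<lambda>x. (h' x)\<^sup>2)"
    using H1 unfolding H1_weak_deriv_def by auto
  have [measurable]: "h \<in> borel_measurable borel" "h' \<in> borel_measurable borel" "Y \<in> borel_measurable borel"
    using hm h'm Ym by auto
  obtain C0 where ae: "AE x in lborel. h x = Fp h' x + C0" using H1_repr[OF H1] by blast
  define H where "H x = Fp h' x + C0" for x
  have Hm[measurable]: "H \<in> borel_measurable borel" unfolding H_def using Fp_meas[OF h'm] by measurable
  have h'loc: "\<And>R. integrable lborel (\<lambda>t. h' t * indicator {-R..R} t)" using L2_locint[OF h'm h'2] .
  have HD: "H b - H a = (\<integral>t. h' t * indicator {a<..b} t \<partial>lborel)" if "a \<le> b" for a b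
    using Fp_diff[OF h'm h'2 that] by (simp add: H_def)
  have sq: "(\<integral>t. 2 * H t * h' t * indicator {a<..b} t \<partial>lborel) = (H b)\<^sup>2 - (H a)\<^sup>2" if "a \<le> b" for a b
    by (rule sq_FTC[OF h'm h'loc _ HD that]) simp
  have aeH: "AE x in lborel. (h x)\<^sup>2 = (H x)\<^sup>2" using ae by eventually_elim (simp add: H_def)
  have H2: "integrable lborel (\<lambda>x. (H x)\<^sup>2)"
    using h2 integrable_cong_AE[of "\<lambda>x. (h x)\<^sup>2" lborel "\<lambda>x. (H x)\<^sup>2"] aeH by simp
  define E where "E x = exp (- c * \<bar>x\<bar>)" for x
  define w where "w x = exp (- 1 * \<bar>x\<bar>)" for x :: real
  have Em[measurable]: "E \<in> borel_measurable borel" unfolding E_def by measurable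
  have wm[measurable]: "w \<in> borel_measurable borel" unfolding w_def by measurable
  have Ei: "integrable lborel E" unfolding E_def using exp_integrable[OF c] .
  have wi: "integrable lborel w" unfolding w_def using exp_integrable[of 1] by simp
  have Eint: "(\<integral>x. E x \<partial>lborel) = 2 / c" unfolding E_def using exp_integral[OF c] .
  have wint: "(\<integral>x. w x \<partial>lborel) = 2" unfolding w_def using exp_integral[of 1] by simp
  have E01: "0 \<le> E x" "E x \<le> 1" for x unfolding E_def using c by auto
  have wE: "w x \<le> E x" for x unfolding w_def E_def using c c1 mult_right_mono[of c 1 "\<bar>x\<bar>"]
    by simp
  have Yw: "\<bar>Y x\<bar> \<le> w x" for x using Yb by (simp add: w_def)
  have w01: "0 \<le> w x" "w x \<le> 1" for x unfolding w_def by auto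
  have eqA: "(\<integral>x. exp (- c * \<bar>x\<bar>) * (h x)\<^sup>2 \<partial>lborel) = (\<integral>x. E x * (H x)\<^sup>2 \<partial>lborel)"
    unfolding E_def by (rule integral_cong_AE) (use aeH in \<open>auto elim!: eventually_mono\<close>)
  have eqJ: "(\<integral>x. Y x * (h x)\<^sup>2 \<partial>lborel) = (\<integral>x. Y x * (H x)\<^sup>2 \<partial>lborel)"
    by (rule integral_cong_AE) (use aeH in \<open>auto elim!: eventually_mono\<close>)
  define g where "g t = 2 * \<bar>H t\<bar> * \<bar>h' t\<bar>" for t
  have gm[measurable]: "g \<in> borel_measurable borel" unfolding g_def by measurable
  have g0: "0 \<le> g t" for t unfolding g_def by simp
  have gi: "integrable lborel g"
  proof (rule Bochner_Integration.integrable_bound[where f="\<lambda>t. (H t)\<^sup>2 + (h' t)\<^sup>2"])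
    show "integrable lborel (\<lambda>t. (H t)\<^sup>2 + (h' t)\<^sup>2)" using H2 h'2 by simp
    show "g \<in> borel_measurable lborel" by simp
    show "AE x in lborel. norm (g x) \<le> norm ((H x)\<^sup>2 + (h' x)\<^sup>2)"
    proof (rule AE_I2)
      fix x
      have "0 \<le> (\<bar>H x\<bar> - \<bar>h' x\<bar>)\<^sup>2" by simp
      then have "2 * \<bar>H x\<bar> * \<bar>h' x\<bar> \<le> (H x)\<^sup>2 + (h' x)\<^sup>2"
        by (simp add: power2_eq_square algebra_simps)
      then show "norm (g x) \<le> norm ((H x)\<^sup>2 + (h' x)\<^sup>2)" by (simp add: g_def)
    qed
  qed
  define Gt where "Gt = (\<integral>t. g t \<partial>lborel)"
  define Gs where "Gs x = (\<integral>t. g t * bt x t \<partial>lborel)" for x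
  have Gsm[measurable]: "Gs \<in> borel_measurable borel" unfolding Gs_def[abs_def] bt_def by measurable
  have bt01: "0 \<le> bt x t" "bt x t \<le> 1" "\<bar>bt x t\<bar> \<le> 1" for x t by (auto simp: bt_def)
  have gbti: "integrable lborel (\<lambda>t. g t * bt x t)" for x
    by (rule int_mult_bdd[OF gi]) (auto simp: bt_def)
  have Gs0: "0 \<le> Gs x" for x unfolding Gs_def using g0 bt01 by (intro integral_nonneg_AE) auto
  have GsGt: "Gs x \<le> Gt" for x unfolding Gs_def Gt_def
  proof (rule integral_mono[OF gbti gi])
    fix t show "g t * bt x t \<le> g t" using g0[of t] bt01[of x t] by (simp add: mult_left_le)
  qed
  have key0: "\<bar>(H x)\<^sup>2 - (H 0)\<^sup>2\<bar> \<le> Gs x" for x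
  proof -
    define D where "D = (if 0 \<le> x then {0<..x} else {x<..0})"
    have btD: "bt x t = indicator D t" for t by (auto simp: bt_def D_def indicator_def)
    have "\<bar>(H x)\<^sup>2 - (H 0)\<^sup>2\<bar> = \<bar>\<integral>t. 2 * H t * h' t * indicator D t \<partial>lborel\<bar>"
    proof (cases "0 \<le> x")
      case True then show ?thesis using sq[OF True] by (simp add: D_def)
    next
      case False
      then have "x \<le> 0" by simp
      from sq[OF this] False show ?thesis by (simp add: D_def abs_minus_commute)
    qed
    also have "\<dots> \<le> Gs x" unfolding Gs_def
    proof (rule integral_abs_bound_integral[OF _ gbti])
      show "integrable lborel (\<lambda>t. 2 * H t * h' t * indicator D t)"
      proof (rule Bochner_Integration.integrable_bound[OF gi])
        show "(\<lambda>t. 2 * H t * h' t * indicator D t) \<in> borel_measurable lborel"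
          unfolding D_def by measurable
        show "AE t in lborel. norm (2 * H t * h' t * indicator D t) \<le> norm (g t)"
          by (rule AE_I2) (auto simp: g_def indicator_def abs_mult)
      qed
      fix t show "\<bar>2 * H t * h' t * indicator D t\<bar> \<le> g t * bt x t"
        by (auto simp: btD g_def indicator_def abs_mult)
    qed
    finally show ?thesis .
  qed
  have key: "\<bar>(H x)\<^sup>2 - (H y)\<^sup>2\<bar> \<le> Gs x + Gs y" for x y
    using key0[of x] key0[of y] by linarith
  define I where "I = (\<integral>x. Y x \<partial>lborel)"
  define J where "J = (\<integral>x. Y x * (H x)\<^sup>2 \<partial>lborel)"
  define A where "A = (\<integral>x. E x * (H x)\<^sup>2 \<partial>lborel)"
  define B where "B = (\<integral>x. (h' x)\<^sup>2 \<partial>lborel)"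
  define K where "K = (\<integral>y. w y * Gs y \<partial>lborel)"
  have Ip: "I > 0" using Ipos by (simp add: I_def)
  have Yi: "integrable lborel Y"
    by (rule Bochner_Integration.integrable_bound[OF wi]) (use Yw w01 in \<open>auto intro!: AE_I2\<close>)
  have YH2i: "integrable lborel (\<lambda>x. Y x * (H x)\<^sup>2)"
  proof (rule Bochner_Integration.integrable_bound[OF H2])
    show "(\<lambda>x. Y x * (H x)\<^sup>2) \<in> borel_measurable lborel" by measurable
    show "AE x in lborel. norm (Y x * (H x)\<^sup>2) \<le> norm ((H x)\<^sup>2)"
    proof (rule AE_I2)
      fix x
      have "\<bar>Y x\<bar> \<le> 1" using Yw[of x] w01[of x] by linarith
      then have "\<bar>Y x\<bar> * (H x)\<^sup>2 \<le> 1 * (H x)\<^sup>2" by (intro mult_right_mono) auto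
      then show "norm (Y x * (H x)\<^sup>2) \<le> norm ((H x)\<^sup>2)" by (simp add: abs_mult)
    qed
  qed
  have EH2i: "integrable lborel (\<lambda>x. E x * (H x)\<^sup>2)"
  proof (rule Bochner_Integration.integrable_bound[OF H2])
    show "(\<lambda>x. E x * (H x)\<^sup>2) \<in> borel_measurable lborel" by measurable
    show "AE x in lborel. norm (E x * (H x)\<^sup>2) \<le> norm ((H x)\<^sup>2)"
    proof (rule AE_I2)
      fix x
      have "E x * (H x)\<^sup>2 \<le> 1 * (H x)\<^sup>2" using E01[of x] by (intro mult_right_mono) auto
      then show "norm (E x * (H x)\<^sup>2) \<le> norm ((H x)\<^sup>2)" using E01[of x] by simp
    qed
  qed
  have wGsi: "integrable lborel (\<lambda>y. w y * Gs y)"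
    by (rule int_mult_bddC[OF wi, where C=Gt]) (use Gs0 GsGt in \<open>auto simp: abs_of_nonneg\<close>)
  have EGsi: "integrable lborel (\<lambda>y. E y * Gs y)"
    by (rule int_mult_bddC[OF Ei, where C=Gt]) (use Gs0 GsGt in \<open>auto simp: abs_of_nonneg\<close>)
  have pw: "I * (H x)\<^sup>2 \<le> J + (2 * Gs x + K)" for x
  proof -
    have i1: "integrable lborel (\<lambda>y. Y y * (H x)\<^sup>2)" using Yi by simp
    have "(\<integral>y. Y y * ((H x)\<^sup>2 - (H y)\<^sup>2) \<partial>lborel) = (\<integral>y. Y y * (H x)\<^sup>2 - Y y * (H y)\<^sup>2 \<partial>lborel)"
      by (simp add: right_diff_distrib)
    also have "\<dots> = I * (H x)\<^sup>2 - J"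
      unfolding I_def J_def by (subst Bochner_Integration.integral_diff[OF i1 YH2i]) simp
    finally have R: "(\<integral>y. Y y * ((H x)\<^sup>2 - (H y)\<^sup>2) \<partial>lborel) = I * (H x)\<^sup>2 - J" .
    have "\<bar>\<integral>y. Y y * ((H x)\<^sup>2 - (H y)\<^sup>2) \<partial>lborel\<bar> \<le> (\<integral>y. w y * Gs x + w y * Gs y \<partial>lborel)"
    proof (rule integral_abs_bound_integral)
      show "integrable lborel (\<lambda>y. Y y * ((H x)\<^sup>2 - (H y)\<^sup>2))"
        using Bochner_Integration.integrable_diff[OF i1 YH2i] by (simp add: right_diff_distrib)
      show "integrable lborel (\<lambda>y. w y * Gs x + w y * Gs y)" using wi wGsi by simp
      fix y
      have "\<bar>Y y * ((H x)\<^sup>2 - (H y)\<^sup>2)\<bar> \<le> w y * (Gs x + Gs y)"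
        unfolding abs_mult by (rule mult_mono[OF Yw key]) (use w01 in auto)
      then show "\<bar>Y y * ((H x)\<^sup>2 - (H y)\<^sup>2)\<bar> \<le> w y * Gs x + w y * Gs y" by (simp add: algebra_simps)
    qed
    also have "\<dots> = 2 * Gs x + K"
      unfolding K_def using wi wGsi wint by (simp add: mult.commute)
    finally show ?thesis using R by linarith
  qed
  have gEi: "integrable lborel (\<lambda>t. g t * E t)" by (rule int_mult_bdd[OF gi]) (use E01 in auto)
  have gwi: "integrable lborel (\<lambda>t. g t * w t)" by (rule int_mult_bdd[OF gi]) (use w01 in auto)
  have EGs: "(\<integral>x. E x * Gs x \<partial>lborel) = (\<integral>t. g t * E t \<partial>lborel) / c"
    using Gs_fubini[OF c gi] unfolding E_def Gs_def .
  have KK: "K = (\<integral>t. g t * w t \<partial>lborel)"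
    using Gs_fubini[of 1 g] gi unfolding K_def w_def Gs_def by simp
  have Kb: "K \<le> (\<integral>t. g t * E t \<partial>lborel)"
    unfolding KK by (rule integral_mono[OF gwi gEi]) (use g0 wE in \<open>auto intro: mult_left_mono\<close>)
  have step1: "I * A \<le> J * (2 / c) + 2 * ((\<integral>t. g t * E t \<partial>lborel) / c) + K * (2 / c)"
  proof -
    have "I * A = (\<integral>x. E x * (I * (H x)\<^sup>2) \<partial>lborel)"
      unfolding A_def by (simp add: algebra_simps)
    also have "\<dots> \<le> (\<integral>x. E x * J + (2 * (E x * Gs x) + E x * K) \<partial>lborel)"
    proof (rule integral_mono)
      show "integrable lborel (\<lambda>x. E x * (I * (H x)\<^sup>2))"
        using integrable_mult_right[OF EH2i, of I] by (simp add: algebra_simps)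
      show "integrable lborel (\<lambda>x. E x * J + (2 * (E x * Gs x) + E x * K))"
        using Ei EGsi by simp
      fix x
      have "E x * (I * (H x)\<^sup>2) \<le> E x * (J + (2 * Gs x + K))"
        by (rule mult_left_mono[OF pw]) (use E01 in auto)
      then show "E x * (I * (H x)\<^sup>2) \<le> E x * J + (2 * (E x * Gs x) + E x * K)"
        by (simp add: algebra_simps)
    qed
    also have "\<dots> = J * (2 / c) + 2 * ((\<integral>t. g t * E t \<partial>lborel) / c) + K * (2 / c)"
      using Ei EGsi Eint EGs by (simp add: mult.commute)
    finally show ?thesis .
  qed
  have amgm: "(4 / c) * (g t * E t) \<le> I / 2 * (E t * (H t)\<^sup>2) + 32 / (c\<^sup>2 * I) * (h' t)\<^sup>2" for t
  proof -
    define a where "a = \<bar>H t\<bar>"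
    define b where "b = \<bar>h' t\<bar>"
    define e where "e = E t"
    have e: "0 \<le> e" "e \<le> 1" using E01 by (auto simp: e_def)
    have id: "I / 2 * (e * a\<^sup>2) + 32 / (c\<^sup>2 * I) * b\<^sup>2 - (4 / c) * (2 * a * b * e)
        = e * (I / 2) * (a - 8 * b / (c * I))\<^sup>2 + 32 / (c\<^sup>2 * I) * b\<^sup>2 * (1 - e)"
      using c Ip by (simp add: field_simps power2_eq_square)
    have "0 \<le> e * (I / 2) * (a - 8 * b / (c * I))\<^sup>2" using e Ip by simp
    moreover have "0 \<le> 32 / (c\<^sup>2 * I) * b\<^sup>2 * (1 - e)" using e Ip c by simp
    ultimately have "(4 / c) * (2 * a * b * e) \<le> I / 2 * (e * a\<^sup>2) + 32 / (c\<^sup>2 * I) * b\<^sup>2"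
      using id by linarith
    then show ?thesis by (simp add: a_def b_def e_def g_def mult.assoc)
  qed
  have step2: "(4 / c) * (\<integral>t. g t * E t \<partial>lborel) \<le> I / 2 * A + 32 / (c\<^sup>2 * I) * B"
  proof -
    have "(4 / c) * (\<integral>t. g t * E t \<partial>lborel) = (\<integral>t. (4 / c) * (g t * E t) \<partial>lborel)" by simp
    also have "\<dots> \<le> (\<integral>t. I / 2 * (E t * (H t)\<^sup>2) + 32 / (c\<^sup>2 * I) * (h' t)\<^sup>2 \<partial>lborel)"
      by (rule integral_mono[OF _ _ amgm]) (use gEi EH2i h'2 in auto)
    also have "\<dots> = I / 2 * A + 32 / (c\<^sup>2 * I) * B"
      unfolding A_def B_def using EH2i h'2 by simp
    finally show ?thesis .
  qed
  have step3: "I * A \<le> 2 / c * J + I / 2 * A + 32 / (c\<^sup>2 * I) * B"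
  proof -
    have "2 * ((\<integral>t. g t * E t \<partial>lborel) / c) + K * (2 / c) \<le> (4 / c) * (\<integral>t. g t * E t \<partial>lborel)"
      using Kb c by (simp add: field_simps)
    then show ?thesis using step1 step2 by (simp add: mult.commute)
  qed
  then have "I / 2 * A \<le> 2 / c * J + 32 / (c\<^sup>2 * I) * B" by simp
  then have h1: "(2 / I) * (I / 2 * A) \<le> (2 / I) * (2 / c * J + 32 / (c\<^sup>2 * I) * B)"
    using Ip by (intro mult_left_mono) auto
  have h2: "(2 / I) * (I / 2 * A) = A" using Ip by simp
  have h3: "(2 / I) * (2 / c * J + 32 / (c\<^sup>2 * I) * B) = 4 / (c * I) * J + 64 / (c\<^sup>2 * I\<^sup>2) * B"
    using Ip c by (simp add: field_simps power2_eq_square)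
  have fin: "A \<le> 4 / (c * I) * J + 64 / (c\<^sup>2 * I\<^sup>2) * B" using h1 by (simp only: h2 h3)
  show ?thesis using fin unfolding eqA eqJ A_def I_def J_def B_def E_def .
qed


end
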